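(* Let $(\mathcal{S},\mathcal{R})$ be a homogeneous positive presentation, and let $\kappa$ be the cardinality of $\mathcal{S}$. Then every $r$-completing sequence starting from $(\mathcal{S},\mathcal{R})$ has length less than $\sup(\kappa^+,\aleph_1)$; every presentation occurring in such a sequence defines the same congruence on $\mathcal{S}^*$ (hence the same monoid and group) as $(\mathcal{S},\mathcal{R})$; and every $r$-completing sequence starting from $(\mathcal{S},\mathcal{R})$ that cannot be extended to a longer $r$-completing sequence ends with an $r$-complete presentation equivalent to $(\mathcal{S},\mathcal{R})$.
   Context: A positive presentation is a pair $(\mathcal{S},\mathcal{R})$ where $\mathcal{S}$ is a nonempty set of letters and $\mathcal{R}$ is a family of relations $u=v$, i.e. unordered pairs $\{u,v\}$ of nonempty words in the free monoid $\mathcal{S}^*$. $\varepsilon$ denotes the empty word; $\equiv^{\mathcal{R}}$ is the smallest congruence on $\mathcal{S}^*$ containing all pairs of $\mathcal{R}$. Let $\mathcal{S}^{-1}=\{s^{-1}:s\in\mathcal{S}\}$ be a disjoint copy of $\mathcal{S}$; for $u\in\mathcal{S}^*$, $u^{-1}$ is obtained by reversing the order of the letters of $u$ and replacing each $s$ by $s^{-1}$. Right reversing relative to $\mathcal{R}$: for words $\mathbf{w},\mathbf{w}'$ on $\mathcal{S}\cup\mathcal{S}^{-1}$ we write $\mathbf{w}\curvearrowright_r^{\mathcal{R}}\mathbf{w}'$ if $\mathbf{w}'$ is obtained from $\mathbf{w}$ by a finite (possibly empty) sequence of steps, each of which either deletes a subword $u^{-1}u$ with $u\in\mathcal{S}^*$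 nonempty, or replaces a subword $u^{-1}v$ with $u,v\in\mathcal{S}^*$ nonempty by a word $v'u'^{-1}$ with $u',v'\in\mathcal{S}^*$ such that $uv'=vu'$ is a relation of $\mathcal{R}$. $(\mathcal{S},\mathcal{R})$ is $r$-complete if for all $u,v,u',v'\in\mathcal{S}^*$ with $uv'\equiv^{\mathcal{R}} vu'$ there exist $u'',v'',w\in\mathcal{S}^*$ with $u^{-1}v\curvearrowright_r^{\mathcal{R}} v''u''^{-1}$, $u'\equiv^{\mathcal{R}} u''w$ and $v'\equiv^{\mathcal{R}} v''w$. $(\mathcal{S},\mathcal{R})$ is homogeneous if there exist maps $\lambda,\mu$ from $\mathcal{S}^*$ to the ordinals, both constant on $\equiv^{\mathcal{R}}$-classes, with $\lambda(su)>\lambda(u)$ and $\mu(us)>\mu(u)$ for all $s\in\mathcal{S}$, $u\in\mathcal{S}^*$. A presentation $(\mathcal{S},\mathcal{R}')$ is a $1$-completion of $(\mathcal{S},\mathcal{R})$ if there exist letters $s,t,r\in\mathcal{S}$ and words $u,v\in\mathcal{S}^*$ with $\mathcal{R}'=\mathcal{R}\cup\{sv=tu\}$, $s^{-1}rr^{-1}t\curvearrowright_r^{\mathcal{R}}vu^{-1}$, but not $v^{-1}s^{-1}tu\curvearrowright_r^{\mathcal{R}}\varepsilon$. An $r$-completing sequence starting from $(\mathcal{S},\mathcal{R})$ is a sequence $(\mathcal{S},\mathcal{R}_\xi)_{\xi<\theta}$ indexed by an ordinal $\theta$ with $\mathcal{R}_0=\mathcal{R}$, such that $(\mathcal{S},\mathcal{R}_{\xi+1})$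 is a $1$-completion of $(\mathcal{S},\mathcal{R}_\xi)$ whenever $\xi+1<\theta$, and $\mathcal{R}_\xi=\bigcup_{\eta<\xi}\mathcal{R}_\eta$ for limit $\xi<\theta$. *)

theory Defs
  imports Main "HOL-Library.Uprod"
begin

text \<open>Words over the alphabet are lists; a relation u = v is an unordered pair
 (Upair u v). Signed letters: Pos s stands for s, Neg s for s inverse.\<close>

datatype 'a sletter = Pos 'a | Neg 'a

definition inv_word :: "'a list \<Rightarrow> 'a sletter list" where
  "inv_word u = map Neg (rev u)"

definition pos_word :: "'a list \<Rightarrow> 'a sletter list" where
  "pos_word u = map Pos u"

definition positive_presentation :: "'a set \<Rightarrow> 'a list uprod set \<Rightarrow> bool" where
  "positive_presentation S R \<longleftrightarrow> S \<noteq> {} \<and>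
     (\<forall>p\<in>R. \<forall>w\<in>set_uprod p. w \<noteq> [] \<and> w \<in> lists S)"

inductive pcong :: "'a list uprod set \<Rightarrow> 'a list \<Rightarrow> 'a list \<Rightarrow> bool" for R where
  base: "Upair u v \<in> R \<Longrightarrow> pcong R u v"
| refl: "pcong R u u"
| sym: "pcong R u v \<Longrightarrow> pcong R v u"
| trans: "pcong R u v \<Longrightarrow> pcong R v w \<Longrightarrow> pcong R u w"
| mult_left: "pcong R u v \<Longrightarrow> pcong R (w @ u) (w @ v)"
| mult_right: "pcong R u v \<Longrightarrow> pcong R (u @ w) (v @ w)"

definition rev_step :: "'a set \<Rightarrow> 'a list uprod set \<Rightarrow> 'a sletter list \<Rightarrow> 'a sletter list \<Rightarrow> bool" where
  "rev_step S R w w' \<longleftrightarrow>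
     (\<exists>x y u. u \<noteq> [] \<and> u \<in> lists S \<and>
        w = x @ inv_word u @ pos_word u @ y \<and> w' = x @ y) \<or>
     (\<exists>x y u v u' v'. u \<noteq> [] \<and> v \<noteq> [] \<and> u \<in> lists S \<and> v \<in> lists S \<and>
        u' \<in> lists S \<and> v' \<in> lists S \<and> Upair (u @ v') (v @ u') \<in> R \<and>
        w = x @ inv_word u @ pos_word v @ y \<and> w' = x @ pos_word v' @ inv_word u' @ y)"

definition reverses :: "'a set \<Rightarrow> 'a list uprod set \<Rightarrow> 'a sletter list \<Rightarrow> 'a sletter list \<Rightarrow> bool" where
  "reverses S R = (rev_step S R)\<^sup>*\<^sup>*"

definition r_complete :: "'a set \<Rightarrow> 'a list uprod set \<Rightarrow> bool" where
  "r_complete S R \<longleftrightarrow>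
     (\<forall>u\<in>lists S. \<forall>v\<in>lists S. \<forall>u'\<in>lists S. \<forall>v'\<in>lists S.
        pcong R (u @ v') (v @ u') \<longrightarrow>
        (\<exists>u''\<in>lists S. \<exists>v''\<in>lists S. \<exists>w\<in>lists S.
           reverses S R (inv_word u @ pos_word v) (pos_word v'' @ inv_word u'') \<and>
           pcong R u' (u'' @ w) \<and> pcong R v' (v'' @ w)))"

text \<open>Ordinal-valued maps are represented by maps into the field of a well-order r
 (a well-ordered set stands for an ordinal); strict order is r minus the diagonal.\<close>

definition homogeneous_via ::
  "'a set \<Rightarrow> 'a list uprod set \<Rightarrow> 'o rel \<Rightarrow> ('a list \<Rightarrow> 'o) \<Rightarrow> ('a list \<Rightarrow> 'o) \<Rightarrow> bool" where
  "homogeneous_via S R r lam mu \<longleftrightarrow> Well_order r \<and>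
     (\<forall>u\<in>lists S. lam u \<in> Field r \<and> mu u \<in> Field r) \<and>
     (\<forall>u\<in>lists S. \<forall>v\<in>lists S. pcong R u v \<longrightarrow> lam u = lam v \<and> mu u = mu v) \<and>
     (\<forall>s\<in>S. \<forall>u\<in>lists S.
        (lam u, lam (s # u)) \<in> r \<and> lam u \<noteq> lam (s # u) \<and>
        (mu u, mu (u @ [s])) \<in> r \<and> mu u \<noteq> mu (u @ [s]))"

definition one_completion :: "'a set \<Rightarrow> 'a list uprod set \<Rightarrow> 'a list uprod set \<Rightarrow> bool" where
  "one_completion S R R' \<longleftrightarrow>
     (\<exists>s\<in>S. \<exists>t\<in>S. \<exists>r\<in>S. \<exists>u\<in>lists S. \<exists>v\<in>lists S.
        R' = insert (Upair (s # v) (t # u)) R \<and>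
        reverses S R [Neg s, Pos r, Neg r, Pos t] (pos_word v @ inv_word u) \<and>
        \<not> reverses S R (inv_word v @ [Neg s, Pos t] @ pos_word u) [])"

text \<open>A sequence indexed by an ordinal theta is a map on the field of a
 well-order t (of order type theta).\<close>

definition wo_less :: "'i rel \<Rightarrow> 'i \<Rightarrow> 'i \<Rightarrow> bool" where
  "wo_less t a b \<longleftrightarrow> (a, b) \<in> t \<and> a \<noteq> b"

definition wo_is_zero :: "'i rel \<Rightarrow> 'i \<Rightarrow> bool" where
  "wo_is_zero t x \<longleftrightarrow> x \<in> Field t \<and> \<not> (\<exists>y. wo_less t y x)"

definition wo_is_succ :: "'i rel \<Rightarrow> 'i \<Rightarrow> 'i \<Rightarrow> bool" where
  "wo_is_succ t x y \<longleftrightarrow> wo_less t x y \<and> \<not> (\<exists>z. wo_less t x z \<and> wo_less t z y)"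

definition wo_is_limit :: "'i rel \<Rightarrow> 'i \<Rightarrow> bool" where
  "wo_is_limit t x \<longleftrightarrow> x \<in> Field t \<and> \<not> wo_is_zero t x \<and> \<not> (\<exists>y. wo_is_succ t y x)"

definition r_completing_seq ::
  "'a set \<Rightarrow> 'a list uprod set \<Rightarrow> 'i rel \<Rightarrow> ('i \<Rightarrow> 'a list uprod set) \<Rightarrow> bool" where
  "r_completing_seq S R t Rs \<longleftrightarrow> Well_order t \<and>
     (\<forall>x. wo_is_zero t x \<longrightarrow> Rs x = R) \<and>
     (\<forall>x y. wo_is_succ t x y \<longrightarrow> one_completion S (Rs x) (Rs y)) \<and>
     (\<forall>x. wo_is_limit t x \<longrightarrow> Rs x = (\<Union>y\<in>{y. wo_less t y x}. Rs y))"

definition seq_extends ::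
  "'i rel \<Rightarrow> ('i \<Rightarrow> 'b) \<Rightarrow> 'j rel \<Rightarrow> ('j \<Rightarrow> 'b) \<Rightarrow> bool" where
  "seq_extends t Rs t' Rs' \<longleftrightarrow>
     (\<exists>f. inj_on f (Field t) \<and> f ` Field t \<subset> Field t' \<and>
        (\<forall>a\<in>Field t. \<forall>b\<in>Field t. (a, b) \<in> t \<longleftrightarrow> (f a, f b) \<in> t') \<and>
        (\<forall>a\<in>Field t. \<forall>y. (y, f a) \<in> t' \<longrightarrow> y \<in> f ` Field t) \<and>
        (\<forall>a\<in>Field t. Rs' (f a) = Rs a))"

text \<open>Non-extendability: no r-completing sequence properly extends it. It suffices
 to consider index type 'i option (any proper extension restricts to one of
 length theta + 1, which fits into 'i option).\<close>

definition non_extendable ::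
  "'a set \<Rightarrow> 'a list uprod set \<Rightarrow> 'i rel \<Rightarrow> ('i \<Rightarrow> 'a list uprod set) \<Rightarrow> bool" where
  "non_extendable S R t Rs \<longleftrightarrow>
     \<not> (\<exists>(t' :: 'i option rel) Rs'. r_completing_seq S R t' Rs' \<and> seq_extends t Rs t' Rs')"

end

theory Submission
  imports Defs "HOL-Library.Countable_Set"
begin


inductive Rev :: "'a set \<Rightarrow> 'a list uprod set \<Rightarrow> 'a list \<Rightarrow> 'a list \<Rightarrow> 'a list \<Rightarrow> 'a list \<Rightarrow> bool"
  for S R where
  R0: "v \<in> lists S \<Longrightarrow> Rev S R [] v v []"
| R0': "u \<in> lists S \<Longrightarrow> Rev S R u [] [] u"
| Rdel: "s \<in> S \<Longrightarrow> Rev S R [s] [s] [] []"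
| Rrel: "s \<in> S \<Longrightarrow> t \<in> S \<Longrightarrow> v' \<in> lists S \<Longrightarrow> u' \<in> lists S \<Longrightarrow>
         Upair (s#v') (t#u') \<in> R \<Longrightarrow> Rev S R [s] [t] v' u'"
| Rh: "Rev S R u v1 v1' u1 \<Longrightarrow> Rev S R u1 v2 v2' u2 \<Longrightarrow> Rev S R u (v1@v2) (v1'@v2') u2"
| Rv: "Rev S R u1 v v1 u1' \<Longrightarrow> Rev S R u2 v1 v2 u2' \<Longrightarrow> Rev S R (u1@u2) v v2 (u1'@u2')"

lemma Rev_lists: "Rev S R u v v' u' \<Longrightarrow> u \<in> lists S \<and> v \<in> lists S \<and> v' \<in> lists S \<and> u' \<in> lists S"
  by (induction rule: Rev.induct) auto

lemma pcong_app: "pcong R a b \<Longrightarrow> pcong R c d \<Longrightarrow> pcong R (a@c) (b@d)"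
  by (meson pcong.mult_left pcong.mult_right pcong.trans)

lemma Rev_sem: "Rev S R u v v' u' \<Longrightarrow> pcong R (u@v') (v@u')"
proof (induction rule: Rev.induct)
  case (R0 v) then show ?case by (simp add: pcong.refl)
next
  case (R0' u) then show ?case by (simp add: pcong.refl)
next
  case (Rdel s) then show ?case by (simp add: pcong.refl)
next
  case (Rrel s t v' u') then show ?case by (simp add: pcong.base)
next
  case (Rh u v1 v1' u1 v2 v2' u2)
  have "pcong R (u @ v1' @ v2') (v1 @ u1 @ v2')"
    using pcong.mult_right[OF Rh.IH(1), of v2'] by simp
  moreover have "pcong R (v1 @ u1 @ v2') (v1 @ v2 @ u2)"
    using pcong.mult_left[OF Rh.IH(2), of v1] by simp
  ultimately show ?case using pcong.trans by fastforce
next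
  case (Rv u1 v v1 u1' u2 v2 u2')
  have "pcong R (u1 @ u2 @ v2) (u1 @ v1 @ u2')"
    using pcong.mult_left[OF Rv.IH(2), of u1] by simp
  moreover have "pcong R (u1 @ v1 @ u2') (v @ u1' @ u2')"
    using pcong.mult_right[OF Rv.IH(1), of u2'] by simp
  ultimately show ?case using pcong.trans by fastforce
qed

lemma Rev_Nil_left_aux: "Rev S R u v v' u' \<Longrightarrow> u = [] \<Longrightarrow> v' = v \<and> u' = []"
  by (induction rule: Rev.induct) auto

lemma Rev_Nil_left: "Rev S R [] v v' u' \<longleftrightarrow> v' = v \<and> u' = [] \<and> v \<in> lists S"
  using Rev_Nil_left_aux Rev_lists R0 by metis

lemma Rev_Nil_right_aux: "Rev S R u v v' u' \<Longrightarrow> v = [] \<Longrightarrow> v' = [] \<and> u' = u"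
  by (induction rule: Rev.induct) auto

lemma Rev_Nil_right: "Rev S R u [] v' u' \<longleftrightarrow> v' = [] \<and> u' = u \<and> u \<in> lists S"
  using Rev_Nil_right_aux Rev_lists R0' by metis

lemma Rev_DH: "Rev S R u v v' u2 \<Longrightarrow> v = v1 @ v2 \<Longrightarrow>
   \<exists>v1' u1 v2'. Rev S R u v1 v1' u1 \<and> Rev S R u1 v2 v2' u2 \<and> v' = v1' @ v2'"
proof (induction arbitrary: v1 v2 rule: Rev.induct)
  case (R0 v)
  then show ?case by (auto intro!: Rev.R0)
next
  case (R0' u)
  then show ?case by (auto intro!: Rev.R0')
next
  case (Rdel s)
  from Rdel.hyps have a: "Rev S R [s] [] [] [s]" "Rev S R [] [s] [s] []" "Rev S R [s] [s] [] []"
    by (auto intro: Rev.R0' Rev.R0 Rev.Rdel)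
  have e: "Rev S R [] [] [] []" by (rule Rev.R0) simp
  have "v1 = [] \<and> v2 = [s] \<or> v1 = [s] \<and> v2 = []" using Rdel.prems by (cases v1) auto
  then show ?case using a e by (elim disjE) fastforce+
next
  case (Rrel s t v' u')
  from Rrel.hyps have a: "Rev S R [s] [] [] [s]" "Rev S R [] [t] [t] []" "Rev S R [s] [t] v' u'"
    "Rev S R u' [] [] u'" "Rev S R [] v' v' []"
    by (auto intro: Rev.R0' Rev.R0 Rev.Rrel)
  have "v1 = [] \<and> v2 = [t] \<or> v1 = [t] \<and> v2 = []" using Rrel.prems by (cases v1) auto
  then show ?case using a by (elim disjE) fastforce+
next
  case (Rh u va va' u1 vb vb' u2)
  from Rh.prems have "(\<exists>us. va = v1 @ us \<and> us @ vb = v2) \<or> (\<exists>us. v1 = va @ us \<and> vb = us @ v2)"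
    unfolding append_eq_append_conv2 by metis
  then show ?case
  proof
    assume "\<exists>us. va = v1 @ us \<and> us @ vb = v2"
    then obtain us where us: "va = v1 @ us" "v2 = us @ vb" by auto
    from Rh.IH(1)[OF us(1)] obtain p1 q1 p2 where
      h: "Rev S R u v1 p1 q1" "Rev S R q1 us p2 u1" "va' = p1 @ p2" by auto
    have "Rev S R q1 (us @ vb) (p2 @ vb') u2" using h(2) Rh.hyps(2) by (rule Rev.Rh)
    then show ?thesis using h us by (metis append.assoc)
  next
    assume "\<exists>us. v1 = va @ us \<and> vb = us @ v2"
    then obtain us where us: "v1 = va @ us" "vb = us @ v2" by auto
    from Rh.IH(2)[OF us(2)] obtain p1 q1 p2 where
      h: "Rev S R u1 us p1 q1" "Rev S R q1 v2 p2 u2" "vb' = p1 @ p2" by auto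
    have "Rev S R u (va @ us) (va' @ p1) q1" using Rh.hyps(1) h(1) by (rule Rev.Rh)
    then show ?thesis using h us by (metis append.assoc)
  qed
next
  case (Rv ua v w ua' ub v' ub')
  from Rv.IH(1)[OF Rv.prems] obtain p1 q1 p2 where
    h1: "Rev S R ua v1 p1 q1" "Rev S R q1 v2 p2 ua'" "w = p1 @ p2" by auto
  from Rv.IH(2)[OF h1(3)] obtain r1 s1 r2 where
    h2: "Rev S R ub p1 r1 s1" "Rev S R s1 p2 r2 ub'" "v' = r1 @ r2" by auto
  have "Rev S R (ua @ ub) v1 r1 (q1 @ s1)" using h1(1) h2(1) by (rule Rev.Rv)
  moreover have "Rev S R (q1 @ s1) v2 r2 (ua' @ ub')" using h1(2) h2(2) by (rule Rev.Rv)
  ultimately show ?case using h2(3) by blast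
qed

lemma Rev_DV: "Rev S R u v v2 u' \<Longrightarrow> u = u1 @ u2 \<Longrightarrow>
   \<exists>v1 u1' u2'. Rev S R u1 v v1 u1' \<and> Rev S R u2 v1 v2 u2' \<and> u' = u1' @ u2'"
proof (induction arbitrary: u1 u2 rule: Rev.induct)
  case (R0 v)
  then show ?case by (auto intro!: Rev.R0)
next
  case (R0' u)
  then show ?case by (auto intro!: Rev.R0')
next
  case (Rdel s)
  from Rdel.hyps have a: "Rev S R [s] [] [] [s]" "Rev S R [] [s] [s] []" "Rev S R [s] [s] [] []"
    by (auto intro: Rev.R0' Rev.R0 Rev.Rdel)
  have e: "Rev S R [] [] [] []" by (rule Rev.R0) simp
  have "u1 = [] \<and> u2 = [s] \<or> u1 = [s] \<and> u2 = []" using Rdel.prems by (cases u1) auto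
  then show ?case using a e by (elim disjE) fastforce+
next
  case (Rrel s t v' u')
  from Rrel.hyps have a: "Rev S R [s] [] [] [s]" "Rev S R [] [t] [t] []" "Rev S R [s] [t] v' u'"
    "Rev S R u' [] [] u'" "Rev S R [] v' v' []"
    by (auto intro: Rev.R0' Rev.R0 Rev.Rrel)
  have "u1 = [] \<and> u2 = [s] \<or> u1 = [s] \<and> u2 = []" using Rrel.prems by (cases u1) auto
  then show ?case using a by (elim disjE) fastforce+
next
  case (Rv ua v va ua' ub vb ub')
  from Rv.prems have "(\<exists>us. ua = u1 @ us \<and> us @ ub = u2) \<or> (\<exists>us. u1 = ua @ us \<and> ub = us @ u2)"
    unfolding append_eq_append_conv2 by metis
  then show ?case
  proof
    assume "\<exists>us. ua = u1 @ us \<and> us @ ub = u2"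
    then obtain us where us: "ua = u1 @ us" "u2 = us @ ub" by auto
    from Rv.IH(1)[OF us(1)] obtain p1 q1 q2 where
      h: "Rev S R u1 v p1 q1" "Rev S R us p1 va q2" "ua' = q1 @ q2" by auto
    have "Rev S R (us @ ub) p1 vb (q2 @ ub')" using h(2) Rv.hyps(2) by (rule Rev.Rv)
    then show ?thesis using h us by (metis append.assoc)
  next
    assume "\<exists>us. u1 = ua @ us \<and> ub = us @ u2"
    then obtain us where us: "u1 = ua @ us" "ub = us @ u2" by auto
    from Rv.IH(2)[OF us(2)] obtain p1 q1 q2 where
      h: "Rev S R us va p1 q1" "Rev S R u2 p1 vb q2" "ub' = q1 @ q2" by auto
    have "Rev S R (ua @ us) v p1 (ua' @ q1)" using Rv.hyps(1) h(1) by (rule Rev.Rv)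
    then show ?thesis using h us by (metis append.assoc)
  qed
next
  case (Rh u v1 v1' w v2 v2' u2')
  from Rh.IH(1)[OF Rh.prems] obtain p1 q1 q2 where
    h1: "Rev S R u1 v1 p1 q1" "Rev S R u2 p1 v1' q2" "w = q1 @ q2" by auto
  from Rh.IH(2)[OF h1(3)] obtain r1 s1 s2 where
    h2: "Rev S R q1 v2 r1 s1" "Rev S R q2 r1 v2' s2" "u2' = s1 @ s2" by auto
  have "Rev S R u1 (v1 @ v2) (p1 @ r1) s1" using h1(1) h2(1) by (rule Rev.Rh)
  moreover have "Rev S R u2 (p1 @ r1) (v1' @ v2') s2" using h1(2) h2(2) by (rule Rev.Rh)
  ultimately show ?case using h2(3) by blast
qed



lemma Rev_same: "u \<in> lists S \<Longrightarrow> Rev S R u u [] []"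
proof (induction u)
  case Nil then show ?case by (simp add: R0)
next
  case (Cons s u)
  have "Rev S R [s] ([s] @ u) ([] @ u) []"
    using Cons by (intro Rh[OF Rdel R0]) auto
  then have "Rev S R ([s] @ u) (s # u) [] ([] @ [])"
    using Cons by (intro Rv[OF _ Cons.IH]) auto
  then show ?case by simp
qed

lemma Rev_same_app: "u \<in> lists S \<Longrightarrow> a \<in> lists S \<Longrightarrow> Rev S R u (u @ a) a []"
  using Rh[OF Rev_same[of u S R] R0[where v=a]] by simp

lemma Rev_same_app2: "u \<in> lists S \<Longrightarrow> a \<in> lists S \<Longrightarrow> Rev S R (u @ a) u [] a"
  using Rv[OF Rev_same[of u S R] R0'[where u=a]] by simp

lemma Rev_rel:
  assumes "u \<noteq> []" "v \<noteq> []" "u \<in> lists S" "v \<in> lists S" "u' \<in> lists S" "v' \<in> lists S"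
    "Upair (u @ v') (v @ u') \<in> R"
  shows "Rev S R u v v' u'"
proof -
  obtain s u1 where u: "u = s # u1" using assms(1) by (cases u) auto
  obtain t v1 where v: "v = t # v1" using assms(2) by (cases v) auto
  have c: "Rev S R [s] [t] (u1 @ v') (v1 @ u')"
    using assms u v by (intro Rrel) auto
  have "Rev S R [s] ([t] @ v1) ((u1 @ v') @ []) u'"
    using c Rev_same_app2[of v1 S u' R] assms v by (intro Rh) auto
  then have "Rev S R ([s] @ u1) (t # v1) v' (u' @ [])"
    using Rev_same_app[of u1 S v' R] assms u by (intro Rv) auto
  then show ?thesis using u v by simp
qed

lemma rev_step_ctx: assumes "rev_step S R w w'" shows "rev_step S R (x @ w @ y) (x @ w' @ y)"
  using assms unfolding rev_step_def
proof (elim disjE exE conjE)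
  fix x1 y1 u assume h: "u \<noteq> []" "u \<in> lists S" "w = x1 @ inv_word u @ pos_word u @ y1" "w' = x1 @ y1"
  show "(\<exists>x' y' u. u \<noteq> [] \<and> u \<in> lists S \<and>
        x @ w @ y = x' @ inv_word u @ pos_word u @ y' \<and> x @ w' @ y = x' @ y') \<or>
     (\<exists>x' y' u v u' v'. u \<noteq> [] \<and> v \<noteq> [] \<and> u \<in> lists S \<and> v \<in> lists S \<and>
        u' \<in> lists S \<and> v' \<in> lists S \<and> Upair (u @ v') (v @ u') \<in> R \<and>
        x @ w @ y = x' @ inv_word u @ pos_word v @ y' \<and> x @ w' @ y = x' @ pos_word v' @ inv_word u' @ y')"
    apply (rule disjI1)
    apply (rule exI[of _ "x @ x1"], rule exI[of _ "y1 @ y"], rule exI[of _ u])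
    using h by simp
next
  fix x1 y1 u v u' v' assume h: "u \<noteq> []" "v \<noteq> []" "u \<in> lists S" "v \<in> lists S"
        "u' \<in> lists S" "v' \<in> lists S" "Upair (u @ v') (v @ u') \<in> R"
        "w = x1 @ inv_word u @ pos_word v @ y1" "w' = x1 @ pos_word v' @ inv_word u' @ y1"
  show "(\<exists>x' y' u. u \<noteq> [] \<and> u \<in> lists S \<and>
        x @ w @ y = x' @ inv_word u @ pos_word u @ y' \<and> x @ w' @ y = x' @ y') \<or>
     (\<exists>x' y' u v u' v'. u \<noteq> [] \<and> v \<noteq> [] \<and> u \<in> lists S \<and> v \<in> lists S \<and>
        u' \<in> lists S \<and> v' \<in> lists S \<and> Upair (u @ v') (v @ u') \<in> R \<and>
        x @ w @ y = x' @ inv_word u @ pos_word v @ y' \<and> x @ w' @ y = x' @ pos_word v' @ inv_word u' @ y')"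
    apply (rule disjI2)
    apply (rule exI[of _ "x @ x1"], rule exI[of _ "y1 @ y"], rule exI[of _ u], rule exI[of _ v],
           rule exI[of _ u'], rule exI[of _ v'])
    using h by simp
qed

lemma reverses_ctx: "reverses S R w w' \<Longrightarrow> reverses S R (x @ w @ y) (x @ w' @ y)"
  unfolding reverses_def
  by (induction rule: rtranclp_induct) (auto intro: rev_step_ctx rtranclp.rtrancl_into_rtrancl)

lemma reverses_trans: "reverses S R a b \<Longrightarrow> reverses S R b c \<Longrightarrow> reverses S R a c"
  unfolding reverses_def by auto

lemma reverses_refl: "reverses S R a a"
  unfolding reverses_def by auto

lemma inv_word_app[simp]: "inv_word (u @ v) = inv_word v @ inv_word u"
  by (simp add: inv_word_def)
lemma pos_word_app[simp]: "pos_word (u @ v) = pos_word u @ pos_word v"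
  by (simp add: pos_word_def)
lemma inv_word_simps[simp]: "inv_word [] = []" "inv_word [s] = [Neg s]"
  by (auto simp add: inv_word_def)
lemma pos_word_simps[simp]: "pos_word [] = []" "pos_word [s] = [Pos s]"
  by (auto simp add: pos_word_def)
lemma inv_word_Cons: "inv_word (s # u) = inv_word u @ [Neg s]"
  by (simp add: inv_word_def)
lemma pos_word_Cons: "pos_word (s # u) = Pos s # pos_word u"
  by (simp add: pos_word_def)

lemma Rev_sound: "Rev S R u v v' u' \<Longrightarrow> reverses S R (inv_word u @ pos_word v) (pos_word v' @ inv_word u')"
proof (induction rule: Rev.induct)
  case (R0 v) then show ?case by (simp add: reverses_refl)
next
  case (R0' u) then show ?case by (simp add: reverses_refl)
next
  case (Rdel s)
  have "rev_step S R ([] @ inv_word [s] @ pos_word [s] @ []) ([] @ [])"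
    unfolding rev_step_def
    apply (rule disjI1)
    apply (rule exI[of _ "[]"], rule exI[of _ "[]"], rule exI[of _ "[s]"])
    using Rdel by simp
  then show ?case unfolding reverses_def by simp
next
  case (Rrel s t v' u')
  have "rev_step S R ([] @ inv_word [s] @ pos_word [t] @ []) ([] @ pos_word v' @ inv_word u' @ [])"
    unfolding rev_step_def
    apply (rule disjI2)
    apply (rule exI[of _ "[]"], rule exI[of _ "[]"], rule exI[of _ "[s]"], rule exI[of _ "[t]"],
           rule exI[of _ u'], rule exI[of _ v'])
    using Rrel by simp
  then show ?case unfolding reverses_def by simp
next
  case (Rh u v1 v1' u1 v2 v2' u2)
  have "reverses S R ([] @ (inv_word u @ pos_word v1) @ pos_word v2) ([] @ (pos_word v1' @ inv_word u1) @ pos_word v2)"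
    by (rule reverses_ctx[OF Rh.IH(1)])
  moreover have "reverses S R (pos_word v1' @ (inv_word u1 @ pos_word v2) @ []) (pos_word v1' @ (pos_word v2' @ inv_word u2) @ [])"
    by (rule reverses_ctx[OF Rh.IH(2)])
  ultimately show ?case by (auto intro: reverses_trans)
next
  case (Rv u1 v v1 u1' u2 v2 u2')
  have "reverses S R (inv_word u2 @ (inv_word u1 @ pos_word v) @ []) (inv_word u2 @ (pos_word v1 @ inv_word u1') @ [])"
    by (rule reverses_ctx[OF Rv.IH(1)])
  moreover have "reverses S R ([] @ (inv_word u2 @ pos_word v1) @ inv_word u1') ([] @ (pos_word v2 @ inv_word u2') @ inv_word u1')"
    by (rule reverses_ctx[OF Rv.IH(2)])
  ultimately show ?case by (auto intro: reverses_trans)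
qed

fun GWs :: "'a set \<Rightarrow> 'a list uprod set \<Rightarrow> 'a sletter list \<Rightarrow> 'a list \<Rightarrow> 'a list \<Rightarrow> 'a list \<Rightarrow> 'a list \<Rightarrow> bool" where
  "GWs S R [] a c a' c' \<longleftrightarrow> a' = a \<and> c' = c"
| "GWs S R (Pos s # w) a c a' c' \<longleftrightarrow> (\<exists>a1. GWs S R w a c a1 c' \<and> s \<in> S \<and> a' = s # a1)"
| "GWs S R (Neg s # w) a c a' c' \<longleftrightarrow> (\<exists>a1 c1 c0. GWs S R w a c a1 c1 \<and> Rev S R [s] a1 a' c0 \<and> c' = c1 @ c0)"

lemma GWs_append: "GWs S R (w1 @ w2) a c a' c' \<longleftrightarrow> (\<exists>a1 c1. GWs S R w2 a c a1 c1 \<and> GWs S R w1 a1 c1 a' c')"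
proof (induction w1 arbitrary: a' c')
  case Nil then show ?case by simp
next
  case (Cons l w1)
  show ?case by (cases l) (simp add: Cons.IH; blast)+
qed

lemma GWs_lists: "GWs S R w a c a' c' \<Longrightarrow> a \<in> lists S \<Longrightarrow> a' \<in> lists S"
proof (induction w arbitrary: a' c')
  case Nil then show ?case by simp
next
  case (Cons l w)
  then show ?case by (cases l) (auto dest!: Cons.IH dest: Rev_lists)
qed

lemma GWs_pos: "GWs S R (pos_word v) a c a' c' \<longleftrightarrow> v \<in> lists S \<and> a' = v @ a \<and> c' = c"
  by (induction v arbitrary: a') (auto simp: pos_word_Cons)

lemma GWs_inv_fwd: "GWs S R (inv_word u) a c a' c' \<Longrightarrow> a \<in> lists S \<Longrightarrow> \<exists>c0. Rev S R u a a' c0 \<and> c' = c @ c0"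
proof (induction u arbitrary: a c)
  case Nil then show ?case by (auto intro: R0)
next
  case (Cons x u)
  from Cons.prems(1) obtain a1 c1 where h: "GWs S R [Neg x] a c a1 c1" "GWs S R (inv_word u) a1 c1 a' c'"
    by (auto simp: inv_word_Cons GWs_append)
  from h(1) obtain c0 where c0: "Rev S R [x] a a1 c0" "c1 = c @ c0" by auto
  have "a1 \<in> lists S" using c0 Rev_lists by metis
  from Cons.IH[OF h(2) this] obtain c2 where c2: "Rev S R u a1 a' c2" "c' = c1 @ c2" by auto
  have "Rev S R ([x] @ u) a a' (c0 @ c2)" using c0(1) c2(1) by (rule Rv)
  then show ?case using c0 c2 by auto
qed

lemma GWs_inv_bwd: "Rev S R u a a' c0 \<Longrightarrow> GWs S R (inv_word u) a c a' (c @ c0)"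
proof (induction u arbitrary: a c c0)
  case Nil then show ?case by (auto simp: Rev_Nil_left)
next
  case (Cons x u)
  from Rev_DV[OF Cons.prems, of "[x]" u] obtain a1 c1 c2 where
    h: "Rev S R [x] a a1 c1" "Rev S R u a1 a' c2" "c0 = c1 @ c2" by auto
  have "GWs S R [Neg x] a c a1 (c @ c1)" using h(1) by auto
  moreover have "GWs S R (inv_word u) a1 (c @ c1) a' ((c @ c1) @ c2)" using Cons.IH[OF h(2)] .
  ultimately show ?case using h(3) by (auto simp: inv_word_Cons GWs_append)
qed

lemma GWs_step: "rev_step S R w w1 \<Longrightarrow> GWs S R w1 a c a' c' \<Longrightarrow> a \<in> lists S \<Longrightarrow> GWs S R w a c a' c'"
  unfolding rev_step_def
proof (elim disjE exE conjE)
  fix x y u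
  assume u: "u \<noteq> []" "u \<in> lists S" and w: "w = x @ inv_word u @ pos_word u @ y" and w1: "w1 = x @ y"
    and G: "GWs S R w1 a c a' c'" and a: "a \<in> lists S"
  from G w1 obtain a1 c1 where h: "GWs S R y a c a1 c1" "GWs S R x a1 c1 a' c'"
    by (auto simp: GWs_append)
  have a1: "a1 \<in> lists S" using GWs_lists[OF h(1) a] .
  have "GWs S R (pos_word u) a1 c1 (u @ a1) c1" using u by (simp add: GWs_pos)
  moreover have "GWs S R (inv_word u) (u @ a1) c1 a1 (c1 @ [])"
    by (rule GWs_inv_bwd[OF Rev_same_app[OF u(2) a1]])
  ultimately show "GWs S R w a c a' c'" using h w by (simp add: GWs_append) blast
next
  fix x y u v u' v'
  assume uv: "u \<noteq> []" "v \<noteq> []" "u \<in> lists S" "v \<in> lists S" "u' \<in> lists S" "v' \<in> lists S"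
    "Upair (u @ v') (v @ u') \<in> R"
    and w: "w = x @ inv_word u @ pos_word v @ y" and w1: "w1 = x @ pos_word v' @ inv_word u' @ y"
    and G: "GWs S R w1 a c a' c'" and a: "a \<in> lists S"
  from G w1 obtain a1 c1 a2 c2 a3 c3 where h: "GWs S R y a c a1 c1" "GWs S R (inv_word u') a1 c1 a2 c2"
    "GWs S R (pos_word v') a2 c2 a3 c3" "GWs S R x a3 c3 a' c'"
    by (auto simp: GWs_append)
  have a1: "a1 \<in> lists S" using GWs_lists[OF h(1) a] .
  from GWs_inv_fwd[OF h(2) a1] obtain c0 where c0: "Rev S R u' a1 a2 c0" "c2 = c1 @ c0" by auto
  have a3: "a3 = v' @ a2" "c3 = c2" using h(3) by (auto simp: GWs_pos)
  have "Rev S R u (v @ a1) (v' @ a2) c0" using Rev_rel[OF uv] c0(1) by (rule Rh)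
  then have "GWs S R (inv_word u) (v @ a1) c1 (v' @ a2) (c1 @ c0)" by (rule GWs_inv_bwd)
  moreover have "GWs S R (pos_word v) a1 c1 (v @ a1) c1" using uv by (simp add: GWs_pos)
  ultimately show "GWs S R w a c a' c'" using h w a3 c0 by (simp add: GWs_append) blast
qed

lemma GWs_reverses: "reverses S R w w' \<Longrightarrow> GWs S R w' a c a' c' \<Longrightarrow> a \<in> lists S \<Longrightarrow> GWs S R w a c a' c'"
  unfolding reverses_def
  by (induction rule: converse_rtranclp_induct) (auto intro: GWs_step)

lemma Rev_complete:
  assumes "reverses S R (inv_word u @ pos_word v) (pos_word v' @ inv_word u')"
    "v' \<in> lists S" "u' \<in> lists S"
  shows "Rev S R u v v' u'"
proof -
  have "GWs S R (inv_word u') [] [] [] ([] @ u')"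
    using assms by (intro GWs_inv_bwd R0') auto
  then have "GWs S R (pos_word v' @ inv_word u') [] [] v' u'"
    using assms by (auto simp: GWs_append GWs_pos)
  then have "GWs S R (inv_word u @ pos_word v) [] [] v' u'"
    using GWs_reverses[OF assms(1)] by auto
  then obtain a1 c1 where "GWs S R (pos_word v) [] [] a1 c1" "GWs S R (inv_word u) a1 c1 v' u'"
    by (auto simp: GWs_append)
  then have "v \<in> lists S" "GWs S R (inv_word u) v [] v' u'" by (auto simp: GWs_pos)
  from GWs_inv_fwd[OF this(2) this(1)] show ?thesis by auto
qed



definition good :: "'a set \<Rightarrow> 'a list uprod set \<Rightarrow> bool" where
  "good S R \<longleftrightarrow> (\<forall>p\<in>R. \<forall>w\<in>set_uprod p. w \<noteq> [] \<and> w \<in> lists S)"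

lemma goodD: "good S R \<Longrightarrow> Upair a b \<in> R \<Longrightarrow> a \<noteq> [] \<and> a \<in> lists S \<and> b \<noteq> [] \<and> b \<in> lists S"
  unfolding good_def by fastforce

definition pstep :: "'a list uprod set \<Rightarrow> 'a list \<Rightarrow> 'a list \<Rightarrow> bool" where
  "pstep R a b \<longleftrightarrow> (\<exists>x y p q. Upair p q \<in> R \<and> a = x @ p @ y \<and> b = x @ q @ y)"

lemma pstep_sym: "pstep R a b \<Longrightarrow> pstep R b a"
  unfolding pstep_def by (metis Upair_inject)

lemma pstep_ctx: "pstep R a b \<Longrightarrow> pstep R (w @ a @ z) (w @ b @ z)"
  unfolding pstep_def
  apply (elim exE conjE)
  subgoal for x y p q
    by (rule exI[of _ "w @ x"], rule exI[of _ "y @ z"], rule exI[of _ p], rule exI[of _ q]) simp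
  done

lemma pstep_pcong: "pstep R a b \<Longrightarrow> pcong R a b"
  unfolding pstep_def
proof (elim exE conjE)
  fix x y p q assume h: "Upair p q \<in> R" "a = x @ p @ y" "b = x @ q @ y"
  have "pcong R p q" using h(1) by (rule pcong.base)
  then have "pcong R (p @ y) (q @ y)" by (rule pcong.mult_right)
  then have "pcong R (x @ p @ y) (x @ q @ y)" by (rule pcong.mult_left)
  then show ?thesis using h by simp
qed

lemma rtc_pcong: "(pstep R)\<^sup>*\<^sup>* a b \<Longrightarrow> pcong R a b"
  by (induction rule: rtranclp_induct) (auto intro: pcong.refl pcong.trans pstep_pcong)

lemma rtc_sym: "(pstep R)\<^sup>*\<^sup>* a b \<Longrightarrow> (pstep R)\<^sup>*\<^sup>* b a"
  by (induction rule: rtranclp_induct) (auto intro: converse_rtranclp_into_rtranclp pstep_sym)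

lemma rtc_ctx: "(pstep R)\<^sup>*\<^sup>* a b \<Longrightarrow> (pstep R)\<^sup>*\<^sup>* (w @ a @ z) (w @ b @ z)"
  by (induction rule: rtranclp_induct) (auto intro: rtranclp.rtrancl_into_rtrancl pstep_ctx)

lemma pcong_rtc: "pcong R a b \<Longrightarrow> (pstep R)\<^sup>*\<^sup>* a b"
proof (induction rule: pcong.induct)
  case (base u v)
  then have "pstep R ([] @ u @ []) ([] @ v @ [])" unfolding pstep_def by blast
  then show ?case by simp
next
  case (refl u) then show ?case by simp
next
  case (sym u v) from sym.IH show ?case by (rule rtc_sym)
next
  case (trans u v w) then show ?case by simp
next
  case (mult_left u v w) then show ?case using rtc_ctx[of R u v w "[]"] by simp
next
  case (mult_right u v w) then show ?case using rtc_ctx[of R u v "[]" w] by simp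
qed

lemma pcong_lists_aux: "pcong R a b \<Longrightarrow> good S R \<Longrightarrow> a \<in> lists S \<longleftrightarrow> b \<in> lists S"
  by (induction rule: pcong.induct) (auto dest: goodD)

lemma pcong_lists: "good S R \<Longrightarrow> pcong R a b \<Longrightarrow> a \<in> lists S \<longleftrightarrow> b \<in> lists S"
  using pcong_lists_aux by metis

lemma pcong_sub_aux: "pcong R1 u v \<Longrightarrow> (\<And>a b. Upair a b \<in> R1 \<Longrightarrow> pcong R2 a b) \<Longrightarrow> pcong R2 u v"
  by (induction rule: pcong.induct) (auto intro: pcong.intros)

lemma pcong_sub: "(\<And>a b. Upair a b \<in> R1 \<Longrightarrow> pcong R2 a b) \<Longrightarrow> pcong R1 u v \<Longrightarrow> pcong R2 u v"
  using pcong_sub_aux by metis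

lemma pcong_mono: "R1 \<subseteq> R2 \<Longrightarrow> pcong R1 u v \<Longrightarrow> pcong R2 u v"
  by (rule pcong_sub) (auto intro: pcong.base)

lemma single_step:
  assumes good: "good S R" and st: "pstep R (r # z) (t # q)"
    and l: "r # z \<in> lists S" "t # q \<in> lists S"
  shows "\<exists>z2 y2 f2. Rev S R [r] [t] z2 y2 \<and> f2 \<in> lists S \<and> pcong R z (z2 @ f2) \<and> pcong R q (y2 @ f2)"
proof -
  from st obtain X Y P Q where h: "Upair P Q \<in> R" "r # z = X @ P @ Y" "t # q = X @ Q @ Y"
    unfolding pstep_def by blast
  have PQ: "P \<noteq> []" "Q \<noteq> []" "P \<in> lists S" "Q \<in> lists S" using goodD[OF good h(1)] by auto
  show ?thesis
  proof (cases X)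
    case Nil
    obtain P1 where P1: "P = r # P1" "z = P1 @ Y" using h(2) PQ Nil by (cases P) auto
    obtain Q1 where Q1: "Q = t # Q1" "q = Q1 @ Y" using h(3) PQ Nil by (cases Q) auto
    have "Rev S R [r] [t] P1 Q1" using PQ P1 Q1 l h(1) by (intro Rrel) auto
    moreover have "Y \<in> lists S" using l P1 by auto
    ultimately show ?thesis using P1 Q1 by (auto intro: pcong.refl)
  next
    case (Cons x X1)
    then have rt: "r = t" "z = X1 @ P @ Y" "q = X1 @ Q @ Y" using h by auto
    have "pstep R z q" unfolding pstep_def using rt h(1) by blast
    then have "pcong R q z" by (auto intro: pstep_pcong pcong.sym)
    moreover have "Rev S R [r] [t] [] []" using rt l by (auto intro: Rdel)
    moreover have "z \<in> lists S" using l by auto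
    ultimately show ?thesis by (intro exI[of _ "[]"] exI[of _ "[]"] exI[of _ z]) (auto intro: pcong.refl)
  qed
qed

lemma wo_facts:
  assumes "Well_order r"
  shows "trans r" "antisym r" "\<And>a. a \<in> Field r \<Longrightarrow> (a, a) \<in> r" "wf (r - Id)"
    "\<And>a b. a \<in> Field r \<Longrightarrow> b \<in> Field r \<Longrightarrow> (a, b) \<in> r \<or> (b, a) \<in> r"
  using assms unfolding well_order_on_def linear_order_on_def partial_order_on_def preorder_on_def
    refl_on_def total_on_def by (auto, metis)

lemma pc_trans: "pcong R a b \<Longrightarrow> pcong R b c \<Longrightarrow> pcong R a c" by (rule pcong.trans)
lemma pc_sym: "pcong R a b \<Longrightarrow> pcong R b a" by (rule pcong.sym)
lemma pc_L: "pcong R a b \<Longrightarrow> pcong R (c @ a) (c @ b)" by (rule pcong.mult_left)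
lemma pc_R: "pcong R a b \<Longrightarrow> pcong R (a @ c) (b @ c)" by (rule pcong.mult_right)

lemma main_complete:
  assumes good: "good S R"
    and wo: "Well_order r"
    and lamF: "\<forall>u\<in>lists S. lam u \<in> Field r"
    and lamI: "\<forall>u\<in>lists S. \<forall>v\<in>lists S. pcong R u v \<longrightarrow> lam u = lam v"
    and lamS: "\<forall>s\<in>S. \<forall>u\<in>lists S. (lam u, lam (s # u)) \<in> r \<and> lam u \<noteq> lam (s # u)"
    and CL: "\<forall>s\<in>S. \<forall>t\<in>S. \<forall>r'\<in>S. \<forall>u\<in>lists S. \<forall>v\<in>lists S.
         reverses S R [Neg s, Pos r', Neg r', Pos t] (pos_word v @ inv_word u) \<longrightarrow>
         reverses S R (inv_word v @ [Neg s, Pos t] @ pos_word u) []"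
  shows "u \<in> lists S \<Longrightarrow> v \<in> lists S \<Longrightarrow> x \<in> lists S \<Longrightarrow> y \<in> lists S \<Longrightarrow> pcong R (u @ x) (v @ y) \<Longrightarrow>
     \<exists>x0 y0 f. Rev S R u v x0 y0 \<and> f \<in> lists S \<and> pcong R x (x0 @ f) \<and> pcong R y (y0 @ f)"
proof -
  note W = wo_facts[OF wo]
  have lamE: "lam a = lam b" if "a \<in> lists S" "b \<in> lists S" "pcong R a b" for a b
    using lamI that by blast
  have CLi: "reverses S R (inv_word v @ [Neg s, Pos t] @ pos_word u) []"
    if "s \<in> S" "t \<in> S" "r' \<in> S" "u \<in> lists S" "v \<in> lists S"
      "reverses S R [Neg s, Pos r', Neg r', Pos t] (pos_word v @ inv_word u)" for s t r' u v
    using CL that by blast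
  have lam_mono: "(lam u, lam (p @ u)) \<in> r" if "p \<in> lists S" "u \<in> lists S" for p u
    using that
  proof (induction p)
    case Nil then show ?case using W(3) lamF by auto
  next
    case (Cons s p)
    then have "(lam (p @ u), lam (s # p @ u)) \<in> r" using lamS by auto
    then show ?case using Cons W(1) unfolding trans_def by auto
  qed
  have lt_trans: "(a, c) \<in> r \<and> a \<noteq> c" if "(a, b) \<in> r" "(b, c) \<in> r" "b \<noteq> c" for a b c
    using that W(1,2) unfolding trans_def antisym_def by blast
  have lam_lt: "(lam u, lam (s # p @ u)) \<in> r \<and> lam u \<noteq> lam (s # p @ u)"
    if "s \<in> S" "p \<in> lists S" "u \<in> lists S" for s p u
    using lt_trans[OF lam_mono[OF that(2,3)]] lamS that by auto
  let ?P = "\<lambda>\<alpha>. \<forall>u v x y. u \<in> lists S \<longrightarrow> v \<in> lists S \<longrightarrow> x \<in> lists S \<longrightarrow> y \<in> lists S \<longrightarrow>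
     pcong R (u @ x) (v @ y) \<longrightarrow> lam (u @ x) = \<alpha> \<longrightarrow>
     (\<exists>x0 y0 f. Rev S R u v x0 y0 \<and> f \<in> lists S \<and> pcong R x (x0 @ f) \<and> pcong R y (y0 @ f))"
  have "?P \<alpha>" for \<alpha>
  proof (induction \<alpha> rule: wf_induct[OF W(4)])
    case (1 \<alpha>)
    have IH: "\<exists>x0 y0 f. Rev S R u v x0 y0 \<and> f \<in> lists S \<and> pcong R x (x0 @ f) \<and> pcong R y (y0 @ f)"
      if "u \<in> lists S" "v \<in> lists S" "x \<in> lists S" "y \<in> lists S" "pcong R (u @ x) (v @ y)"
        "(lam (u @ x), \<alpha>) \<in> r" "lam (u @ x) \<noteq> \<alpha>" for u v x y
      using 1 that by blast
    have L: "\<exists>x2 y2 f. Rev S R [s] [t] x2 y2 \<and> f \<in> lists S \<and> pcong R p (x2 @ f) \<and> pcong R q (y2 @ f)"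
      if L0: "s \<in> S" "p \<in> lists S" "lam (s # p) = \<alpha>" "pcong R (s # p) (t # q)" for s p t q
    proof -
      have "\<forall>t q. b = t # q \<longrightarrow>
          (\<exists>x2 y2 f. Rev S R [s] [t] x2 y2 \<and> f \<in> lists S \<and> pcong R p (x2 @ f) \<and> pcong R q (y2 @ f))"
        if "(pstep R)\<^sup>*\<^sup>* (s # p) b" for b
        using that
      proof (induction rule: rtranclp_induct)
        case base
        show ?case
        proof (intro allI impI)
          fix t q assume "s # p = t # q"
          then show "\<exists>x2 y2 f. Rev S R [s] [t] x2 y2 \<and> f \<in> lists S \<and> pcong R p (x2 @ f) \<and> pcong R q (y2 @ f)"
            using L0 by (intro exI[of _ "[]"] exI[of _ "[]"] exI[of _ p]) (auto intro: Rdel pcong.refl)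
        qed
      next
        case (step m b)
        show ?case
        proof (intro allI impI)
          fix t q assume b: "b = t # q"
          have sp: "s # p \<in> lists S" using L0 by auto
          have pm: "pcong R (s # p) m" using step.hyps(1) by (rule rtc_pcong)
          have pb: "pcong R (s # p) b" using rtc_pcong[OF rtranclp.rtrancl_into_rtrancl[OF step.hyps(1,2)]] .
          have ml: "m \<in> lists S" using pcong_lists[OF good pm] sp by simp
          have bl: "b \<in> lists S" using pcong_lists[OF good pb] sp by simp
          obtain X Y P Q where XP: "Upair P Q \<in> R" "m = X @ P @ Y"
            using step.hyps(2) unfolding pstep_def by blast
          have "P \<noteq> []" using goodD[OF good XP(1)] by simp
          then have "m \<noteq> []" using XP(2) by simp
          then obtain r' z where m: "m = r' # z" by (cases m) auto
          have "\<exists>x1 z1 f1. Rev S R [s] [r'] x1 z1 \<and> f1 \<in> lists S \<and> pcong R p (x1 @ f1) \<and> pcong R z (z1 @ f1)"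
            using step.IH m by simp
          then obtain x1 z1 f1 where
            h1: "Rev S R [s] [r'] x1 z1" "f1 \<in> lists S" "pcong R p (x1 @ f1)" "pcong R z (z1 @ f1)"
            by blast
          have ml': "r' # z \<in> lists S" "t # q \<in> lists S" using ml bl m b by simp_all
          have "pstep R (r' # z) (t # q)" using step.hyps(2) m b by simp
          from single_step[OF good this ml'] obtain z2 y2 f2 where
            h2: "Rev S R [r'] [t] z2 y2" "f2 \<in> lists S" "pcong R z (z2 @ f2)" "pcong R q (y2 @ f2)"
            by blast
          have lm: "lam m = \<alpha>" using lamE[OF sp ml pm] L0(3) by simp
          have zl: "z \<in> lists S" "r' \<in> S" using ml m by auto
          have z1l: "z1 \<in> lists S" "x1 \<in> lists S" using Rev_lists[OF h1(1)] by auto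
          have z2l: "z2 \<in> lists S" "y2 \<in> lists S" using Rev_lists[OF h2(1)] by auto
          have "lam (z1 @ f1) = lam z" using lamE[OF _ zl(1) pc_sym[OF h1(4)]] z1l h1(2) by simp
          moreover have "(lam z, lam (r' # [] @ z)) \<in> r \<and> lam z \<noteq> lam (r' # [] @ z)"
            using lam_lt[of r' "[]" z] zl by simp
          ultimately have lt: "(lam (z1 @ f1), \<alpha>) \<in> r" "lam (z1 @ f1) \<noteq> \<alpha>" using lm m by auto
          have "pcong R (z1 @ f1) (z2 @ f2)" using pc_trans[OF pc_sym[OF h1(4)] h2(3)] .
          from IH[OF z1l(1) z2l(1) h1(2) h2(2) this lt] obtain x3 y3 g where
            h3: "Rev S R z1 z2 x3 y3" "g \<in> lists S" "pcong R f1 (x3 @ g)" "pcong R f2 (y3 @ g)" by blast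
          have x3l: "x3 \<in> lists S" "y3 \<in> lists S" using Rev_lists[OF h3(1)] by auto
          have r1: "reverses S R [Neg s, Pos r', Neg r', Pos t] (pos_word x1 @ inv_word z1 @ [Neg r', Pos t])"
            using reverses_ctx[OF Rev_sound[OF h1(1)], of "[]" "[Neg r', Pos t]"] by simp
          have r2: "reverses S R (pos_word x1 @ inv_word z1 @ [Neg r', Pos t]) (pos_word x1 @ inv_word z1 @ pos_word z2 @ inv_word y2)"
            using reverses_ctx[OF Rev_sound[OF h2(1)], of "pos_word x1 @ inv_word z1" "[]"] by simp
          have r3: "reverses S R (pos_word x1 @ inv_word z1 @ pos_word z2 @ inv_word y2) (pos_word x1 @ pos_word x3 @ inv_word y3 @ inv_word y2)"
            using reverses_ctx[OF Rev_sound[OF h3(1)], of "pos_word x1" "inv_word y2"] by simp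
          have "reverses S R [Neg s, Pos r', Neg r', Pos t] (pos_word (x1 @ x3) @ inv_word (y2 @ y3))"
            using reverses_trans[OF reverses_trans[OF r1 r2] r3] by simp
          then have "reverses S R (inv_word (x1 @ x3) @ [Neg s, Pos t] @ pos_word (y2 @ y3)) []"
            using b bl x3l z1l z2l L0(1) zl(2) by (intro CLi[of s t r']) auto
          then have "reverses S R (inv_word (s # (x1 @ x3)) @ pos_word (t # (y2 @ y3))) (pos_word [] @ inv_word [])"
            by (simp add: inv_word_Cons pos_word_Cons)
          then have RR: "Rev S R ([s] @ (x1 @ x3)) (t # (y2 @ y3)) [] []"
            by (intro Rev_complete) auto
          from Rev_DV[OF RR HOL.refl] obtain v1 u1' u2' where
            d1: "Rev S R [s] (t # (y2 @ y3)) v1 u1'" "Rev S R (x1 @ x3) v1 [] u2'" "[] = u1' @ u2'" by blast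
          have "Rev S R [s] ([t] @ (y2 @ y3)) v1 u1'" using d1(1) by simp
          from Rev_DH[OF this HOL.refl] obtain x2 yy v2' where
            d2: "Rev S R [s] [t] x2 yy" "Rev S R yy (y2 @ y3) v2' u1'" "v1 = x2 @ v2'" by blast
          have u0: "u1' = []" "u2' = []" using d1(3) by auto
          have e1: "pcong R (x1 @ x3) (x2 @ v2')" using Rev_sem[OF d1(2)] u0 d2(3) by simp
          have e2: "pcong R (yy @ v2') (y2 @ y3)" using Rev_sem[OF d2(2)] u0 by simp
          have v2l: "v2' \<in> lists S" using Rev_lists[OF d2(2)] by auto
          have "pcong R p (x1 @ x3 @ g)" using pc_trans[OF h1(3) pc_L[OF h3(3), of x1]] .
          moreover have "pcong R (x1 @ x3 @ g) (x2 @ v2' @ g)" using pc_R[OF e1, of g] by simp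
          ultimately have E1: "pcong R p (x2 @ (v2' @ g))" by (rule pc_trans)
          have "pcong R q (y2 @ y3 @ g)" using pc_trans[OF h2(4) pc_L[OF h3(4), of y2]] .
          moreover have "pcong R (y2 @ y3 @ g) (yy @ v2' @ g)" using pc_R[OF pc_sym[OF e2], of g] by simp
          ultimately have E2: "pcong R q (yy @ (v2' @ g))" by (rule pc_trans)
          show "\<exists>x2 y2 f. Rev S R [s] [t] x2 y2 \<and> f \<in> lists S \<and> pcong R p (x2 @ f) \<and> pcong R q (y2 @ f)"
            using d2(1) E1 E2 v2l h3(2) by (intro exI[of _ x2] exI[of _ yy] exI[of _ "v2' @ g"]) simp
        qed
      qed
      with pcong_rtc[OF L0(4)] show ?thesis by blast
    qed
    show ?case
    proof (intro allI impI)
      fix u v x y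
      assume l: "u \<in> lists S" "v \<in> lists S" "x \<in> lists S" "y \<in> lists S"
        and e: "pcong R (u @ x) (v @ y)" and la: "lam (u @ x) = \<alpha>"
      show "\<exists>x0 y0 f. Rev S R u v x0 y0 \<and> f \<in> lists S \<and> pcong R x (x0 @ f) \<and> pcong R y (y0 @ f)"
      proof (cases "u = [] \<or> v = []")
        case True
        then show ?thesis
        proof
          assume "u = []"
          then show ?thesis using l e by (intro exI[of _ v] exI[of _ "[]"] exI[of _ y]) (auto intro: R0 pcong.refl)
        next
          assume v0: "v = []"
          have "pcong R y (u @ x)" using e pc_sym v0 by simp
          then show ?thesis using l v0 by (intro exI[of _ "[]"] exI[of _ u] exI[of _ x]) (auto intro: R0' pcong.refl)
        qed
      next
        case False
        then obtain s u1 t v1 where uv: "u = s # u1" "v = t # v1" by (cases u; cases v) auto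
        have sl: "s \<in> S" "u1 \<in> lists S" "t \<in> S" "v1 \<in> lists S" using l uv by auto
        have ux: "u1 @ x \<in> lists S" "v1 @ y \<in> lists S" using sl l by auto
        from L[of s "u1 @ x" t "v1 @ y"] sl ux la e uv obtain x2 y2 f where
          h1: "Rev S R [s] [t] x2 y2" "f \<in> lists S" "pcong R (u1 @ x) (x2 @ f)" "pcong R (v1 @ y) (y2 @ f)"
          by auto
        have x2l: "x2 \<in> lists S" "y2 \<in> lists S" using Rev_lists[OF h1(1)] by auto
        have lt1: "(lam (u1 @ x), \<alpha>) \<in> r" "lam (u1 @ x) \<noteq> \<alpha>"
          using lam_lt[of s "[]" "u1 @ x"] sl l la uv by auto
        from IH[OF sl(2) x2l(1) l(3) h1(2) h1(3) lt1] obtain x3 y3 g where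
          h2: "Rev S R u1 x2 x3 y3" "g \<in> lists S" "pcong R x (x3 @ g)" "pcong R f (y3 @ g)" by blast
        have lv: "lam (v @ y) = \<alpha>" using lamE[OF _ _ e] l la by simp
        have "lam (y2 @ f) = lam (v1 @ y)" using lamE[OF _ _ pc_sym[OF h1(4)]] x2l h1(2) ux by simp
        moreover have "(lam (v1 @ y), lam (t # [] @ (v1 @ y))) \<in> r \<and> lam (v1 @ y) \<noteq> lam (t # [] @ (v1 @ y))"
          using lam_lt[of t "[]" "v1 @ y"] sl ux by auto
        ultimately have lt2: "(lam (y2 @ f), \<alpha>) \<in> r" "lam (y2 @ f) \<noteq> \<alpha>" using lv uv by auto
        from IH[OF x2l(2) sl(4) h1(2) l(4) pc_sym[OF h1(4)] lt2] obtain x4 y4 h where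
          h3: "Rev S R y2 v1 x4 y4" "h \<in> lists S" "pcong R f (x4 @ h)" "pcong R y (y4 @ h)" by blast
        have x3l: "x3 \<in> lists S" "y3 \<in> lists S" using Rev_lists[OF h2(1)] by auto
        have x4l: "x4 \<in> lists S" "y4 \<in> lists S" using Rev_lists[OF h3(1)] by auto
        have "(lam f, lam (x2 @ f)) \<in> r" using lam_mono x2l h1(2) by auto
        moreover have "lam (x2 @ f) = lam (u1 @ x)" using lamE[OF _ _ pc_sym[OF h1(3)]] x2l h1(2) ux by simp
        ultimately have "(lam f, \<alpha>) \<in> r \<and> lam f \<noteq> \<alpha>" using lt_trans lt1 by auto
        moreover have "lam (y3 @ g) = lam f" using lamE[OF _ _ pc_sym[OF h2(4)]] x3l h2(2) h1(2) by simp
        ultimately have lt3: "(lam (y3 @ g), \<alpha>) \<in> r" "lam (y3 @ g) \<noteq> \<alpha>" by auto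
        have "pcong R (y3 @ g) (x4 @ h)" using pc_trans[OF pc_sym[OF h2(4)] h3(3)] .
        from IH[OF x3l(2) x4l(1) h2(2) h3(2) this lt3] obtain x5 y5 k where
          h4: "Rev S R y3 x4 x5 y5" "k \<in> lists S" "pcong R g (x5 @ k)" "pcong R h (y5 @ k)" by blast
        have A1: "Rev S R [s] ([t] @ v1) (x2 @ x4) y4" using h1(1) h3(1) by (rule Rh)
        have A2: "Rev S R u1 (x2 @ x4) (x3 @ x5) y5" using h2(1) h4(1) by (rule Rh)
        have A: "Rev S R ([s] @ u1) (t # v1) (x3 @ x5) (y4 @ y5)" using A1 A2 by (intro Rv) auto
        have "pcong R x (x3 @ x5 @ k)" using pc_trans[OF h2(3) pc_L[OF h4(3), of x3]] by simp
        moreover have "pcong R y (y4 @ y5 @ k)" using pc_trans[OF h3(4) pc_L[OF h4(4), of y4]] by simp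
        ultimately show ?thesis using A uv h4(2) by (intro exI[of _ "x3 @ x5"] exI[of _ "y4 @ y5"] exI[of _ k]) auto
      qed
    qed
  qed
  then show "u \<in> lists S \<Longrightarrow> v \<in> lists S \<Longrightarrow> x \<in> lists S \<Longrightarrow> y \<in> lists S \<Longrightarrow> pcong R (u @ x) (v @ y) \<Longrightarrow>
     \<exists>x0 y0 f. Rev S R u v x0 y0 \<and> f \<in> lists S \<and> pcong R x (x0 @ f) \<and> pcong R y (y0 @ f)"
    by blast
qed



lemma GWs_final: "v \<in> lists S \<Longrightarrow> u \<in> lists S \<Longrightarrow> GWs S R (pos_word v @ inv_word u) [] [] v u"
proof -
  assume a: "v \<in> lists S" "u \<in> lists S"
  have "GWs S R (inv_word u) [] [] [] ([] @ u)"
    using a by (intro GWs_inv_bwd R0') auto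
  then show ?thesis using a by (auto simp: GWs_append GWs_pos)
qed

lemma one_completion_facts:
  assumes oc: "one_completion S R1 R2"
  shows "\<exists>s t u v. R2 = insert (Upair (s # v) (t # u)) R1 \<and> s \<in> S \<and> t \<in> S \<and> u \<in> lists S \<and> v \<in> lists S
     \<and> pcong R1 (s # v) (t # u) \<and> Upair (s # v) (t # u) \<notin> R1"
proof -
  from oc obtain s t r u v where h: "s \<in> S" "t \<in> S" "r \<in> S" "u \<in> lists S" "v \<in> lists S"
    "R2 = insert (Upair (s # v) (t # u)) R1"
    "reverses S R1 [Neg s, Pos r, Neg r, Pos t] (pos_word v @ inv_word u)"
    "\<not> reverses S R1 (inv_word v @ [Neg s, Pos t] @ pos_word u) []"
    unfolding one_completion_def by blast
  have "GWs S R1 [Neg s, Pos r, Neg r, Pos t] [] [] v u"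
    using GWs_reverses[OF h(7) GWs_final[OF h(5,4)]] by simp
  then obtain a2 c4 c0 where g: "Rev S R1 [r] [t] a2 c4" "Rev S R1 [s] (r # a2) v c0" "u = c4 @ c0"
    by auto
  have e1: "pcong R1 (r # a2) (t # c4)" using Rev_sem[OF g(1)] by simp
  have e2: "pcong R1 (s # v) (r # a2 @ c0)" using Rev_sem[OF g(2)] by simp
  have "pcong R1 (r # a2 @ c0) (t # c4 @ c0)" using pc_R[OF e1, of c0] by simp
  then have pc: "pcong R1 (s # v) (t # u)" using pc_trans[OF e2] g(3) by simp
  have nin: "Upair (s # v) (t # u) \<notin> R1"
  proof
    assume "Upair (s # v) (t # u) \<in> R1"
    then have "Rev S R1 (s # v) (t # u) [] []" using h by (intro Rev_rel) auto
    from Rev_sound[OF this] have "reverses S R1 (inv_word v @ [Neg s, Pos t] @ pos_word u) []"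
      by (simp add: inv_word_Cons pos_word_Cons)
    with h(8) show False by simp
  qed
  show ?thesis using h pc nin by blast
qed

lemma seq_inv:
  assumes good: "good S R" and seq: "r_completing_seq S R t Rs"
  shows "x \<in> Field t \<Longrightarrow> good S (Rs x) \<and> (\<forall>a b. Upair a b \<in> Rs x \<longrightarrow> pcong R a b) \<and> R \<subseteq> Rs x
     \<and> (\<forall>y. (y, x) \<in> t \<longrightarrow> Rs y \<subseteq> Rs x)"
proof -
  have wo: "Well_order t" and z: "\<And>x. wo_is_zero t x \<Longrightarrow> Rs x = R"
    and sc: "\<And>x y. wo_is_succ t x y \<Longrightarrow> one_completion S (Rs x) (Rs y)"
    and li: "\<And>x. wo_is_limit t x \<Longrightarrow> Rs x = (\<Union>y\<in>{y. wo_less t y x}. Rs y)"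
    using seq unfolding r_completing_seq_def by auto
  note W = wo_facts[OF wo]
  let ?I = "\<lambda>x. good S (Rs x) \<and> (\<forall>a b. Upair a b \<in> Rs x \<longrightarrow> pcong R a b) \<and> R \<subseteq> Rs x
     \<and> (\<forall>y. (y, x) \<in> t \<longrightarrow> Rs y \<subseteq> Rs x)"
  have "x \<in> Field t \<longrightarrow> ?I x" for x
  proof (induction x rule: wf_induct[OF W(4)])
    case (1 x)
    show ?case
    proof
      assume xF: "x \<in> Field t"
      have IH: "?I y" if "wo_less t y x" for y
        using 1 that unfolding wo_less_def by (auto intro: FieldI1)
      consider (zero) "wo_is_zero t x" | (succ) y where "wo_is_succ t y x" | (limit) "wo_is_limit t x"
        using xF unfolding wo_is_limit_def by blast
      then show "?I x"
      proof cases
        case zero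
        have "Rs x = R" using z[OF zero] .
        moreover have "y = x" if "(y, x) \<in> t" for y
          using zero that unfolding wo_is_zero_def wo_less_def by blast
        ultimately show ?thesis using good by (auto intro: pcong.base)
      next
        case succ
        have yx: "wo_less t y x" using succ unfolding wo_is_succ_def by auto
        note Iy = IH[OF yx]
        from one_completion_facts[OF sc[OF succ]] obtain s t' u v where
          h: "Rs x = insert (Upair (s # v) (t' # u)) (Rs y)" "s \<in> S" "t' \<in> S" "u \<in> lists S" "v \<in> lists S"
            "pcong (Rs y) (s # v) (t' # u)"
          by blast
        have g: "good S (Rs x)" using Iy h unfolding good_def by auto
        have pcR: "pcong R (s # v) (t' # u)"
          using pcong_sub[of "Rs y" R, OF _ h(6)] Iy by blast
        have snd: "\<forall>a b. Upair a b \<in> Rs x \<longrightarrow> pcong R a b"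
        proof (intro allI impI)
          fix a b assume "Upair a b \<in> Rs x"
          then have "Upair a b = Upair (s # v) (t' # u) \<or> Upair a b \<in> Rs y" using h(1) by auto
          then show "pcong R a b"
          proof
            assume "Upair a b = Upair (s # v) (t' # u)"
            then show ?thesis using pcR pc_sym by auto
          qed (use Iy in blast)
        qed
        have mono: "Rs z \<subseteq> Rs x" if "(z, x) \<in> t" for z
        proof (cases "z = x")
          case True then show ?thesis by simp
        next
          case False
          have zF: "z \<in> Field t" "y \<in> Field t" using that yx unfolding wo_less_def by (auto intro: FieldI1)
          have "(z, y) \<in> t"
          proof (rule ccontr)
            assume "(z, y) \<notin> t"
            then have "(y, z) \<in> t" "y \<noteq> z" using W(5)[OF zF] W(3) zF by auto
            then show False using succ that False unfolding wo_is_succ_def wo_less_def by blast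
          qed
          then show ?thesis using Iy h(1) by auto
        qed
        show ?thesis using g snd mono Iy h(1) by auto
      next
        case limit
        have L: "Rs x = (\<Union>y\<in>{y. wo_less t y x}. Rs y)" by (rule li[OF limit])
        obtain y0 where y0: "wo_less t y0 x"
          using limit unfolding wo_is_limit_def wo_is_zero_def by blast
        have g: "good S (Rs x)" using L IH unfolding good_def by blast
        have snd: "\<forall>a b. Upair a b \<in> Rs x \<longrightarrow> pcong R a b" using L IH by blast
        have RR: "R \<subseteq> Rs x" using L IH[OF y0] y0 by blast
        have mono: "Rs z \<subseteq> Rs x" if "(z, x) \<in> t" for z
          using that L unfolding wo_less_def by (cases "z = x") auto
        show ?thesis using g snd RR mono by blast
      qed
    qed
  qed
  then show "x \<in> Field t \<Longrightarrow> ?I x" by blast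
qed

lemma seq_pcong:
  assumes good: "good S R" and seq: "r_completing_seq S R t Rs" and x: "x \<in> Field t"
  shows "pcong (Rs x) u v \<longleftrightarrow> pcong R u v"
proof -
  note I = seq_inv[OF good seq x]
  show ?thesis
  proof
    assume "pcong (Rs x) u v" then show "pcong R u v" using pcong_sub[of "Rs x" R] I by blast
  next
    assume "pcong R u v" then show "pcong (Rs x) u v" using pcong_mono I by blast
  qed
qed



context includes cardinal_syntax
begin

lemma wo_lt_cardSuc:
  assumes wo: "Well_order t" and ck: "Card_order k" and le: "|Field t| \<le>o k"
  shows "t <o cardSuc k"
proof (rule ccontr)
  assume "\<not> t <o cardSuc k"
  then have "cardSuc k \<le>o t"
    using not_ordLess_iff_ordLeq[OF cardSuc_Well_order[OF ck] wo] by simp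
  then have "|Field (cardSuc k)| \<le>o |Field t|" by (rule card_of_mono2)
  then have "cardSuc k \<le>o |Field t|"
    using ordIso_ordLeq_trans[OF ordIso_symmetric[OF card_of_Field_ordIso[OF cardSuc_Card_order[OF ck]]]] by blast
  then have "cardSuc k \<le>o k" using le by (rule ordLeq_transitive)
  then show False using not_ordLess_ordLeq[OF cardSuc_greater[OF ck]] by blast
qed

lemma lists_card_infinite:
  assumes inf: "\<not> finite S"
  shows "|lists S| \<le>o |S|"
proof -
  have "S \<noteq> {}" using inf by auto
  then obtain s0 where s0: "s0 \<in> S" by blast
  define L where "L n = {xs \<in> lists S. length xs = n}" for n
  have LL: "|L n| \<le>o |S|" for n
  proof (induction n)
    case 0
    have "inj_on (\<lambda>_. s0) (L 0)" unfolding L_def inj_on_def by simp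
    then show ?case using s0 by (intro card_of_ordLeqI[of "\<lambda>_. s0"]) simp_all
  next
    case (Suc n)
    have "|L (Suc n)| \<le>o |S \<times> L n|"
    proof (rule card_of_ordLeqI[of "\<lambda>xs. (hd xs, tl xs)"])
      show "inj_on (\<lambda>xs. (hd xs, tl xs)) (L (Suc n))"
      proof (rule inj_onI)
        fix xs ys assume "xs \<in> L (Suc n)" "ys \<in> L (Suc n)" "(hd xs, tl xs) = (hd ys, tl ys)"
        then show "xs = ys" unfolding L_def by (cases xs; cases ys) simp_all
      qed
      show "\<And>a. a \<in> L (Suc n) \<Longrightarrow> (hd a, tl a) \<in> S \<times> L n"
      proof -
        fix a assume "a \<in> L (Suc n)"
        then show "(hd a, tl a) \<in> S \<times> L n" unfolding L_def by (cases a) simp_all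
      qed
    qed
    moreover have "|S \<times> L n| \<le>o |S \<times> S|" using card_of_Times_mono2[OF Suc.IH] .
    moreover have "|S \<times> S| =o |S|" using card_of_Times_same_infinite[OF inf] .
    ultimately show ?case using ordLeq_ordIso_trans ordLeq_transitive by metis
  qed
  have "lists S = (\<Union>n\<in>UNIV. L n)" unfolding L_def by auto
  moreover have "|\<Union>n\<in>UNIV. L n| \<le>o |S|"
  proof (rule card_of_UNION_ordLeq_infinite[OF inf])
    show "|UNIV :: nat set| \<le>o |S|" using inf infinite_iff_card_of_nat by blast
    show "\<forall>i\<in>UNIV. |L i| \<le>o |S|" using LL by blast
  qed
  ultimately show ?thesis by simp
qed

lemma field_bound:
  assumes good: "good S R" and seq: "r_completing_seq S R t Rs"
  shows "\<exists>g. inj_on g (Field t) \<and> g ` Field t \<subseteq> lists S \<times> lists S"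
proof -
  have wo: "Well_order t" and sc: "\<And>x y. wo_is_succ t x y \<Longrightarrow> one_completion S (Rs x) (Rs y)"
    using seq unfolding r_completing_seq_def by auto
  note W = wo_facts[OF wo]
  note I = seq_inv[OF good seq]
  define Q where "Q x p \<longleftrightarrow> fst p \<in> lists S \<and> snd p \<in> lists S \<and> fst p \<noteq> [] \<and> Upair (fst p) (snd p) \<notin> Rs x
      \<and> (\<forall>z. wo_less t x z \<longrightarrow> Upair (fst p) (snd p) \<in> Rs z)" for x p
  have exQ: "\<exists>p. Q x p" if "wo_less t x y" for x y
  proof -
    have "y \<in> {y. wo_less t x y}" using that by simp
    then obtain m where m: "m \<in> {y. wo_less t x y}" "\<forall>y. (y, m) \<in> t - Id \<longrightarrow> y \<notin> {y. wo_less t x y}"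
      using W(4) unfolding wf_eq_minimal by metis
    have succ: "wo_is_succ t x m" using m unfolding wo_is_succ_def wo_less_def by auto
    have mle: "(m, z) \<in> t" if "wo_less t x z" for z
    proof (rule ccontr)
      assume "(m, z) \<notin> t"
      moreover have "m \<in> Field t" "z \<in> Field t" using m(1) that unfolding wo_less_def by (auto intro: FieldI2)
      ultimately have "(z, m) \<in> t" "z \<noteq> m" using W(5) W(3) by blast+
      then show False using m(2) that by auto
    qed
    from one_completion_facts[OF sc[OF succ]] obtain s t' u v where
      h: "Rs m = insert (Upair (s # v) (t' # u)) (Rs x)" "s \<in> S" "t' \<in> S" "u \<in> lists S" "v \<in> lists S"
        "Upair (s # v) (t' # u) \<notin> Rs x" by blast
    have "Upair (s # v) (t' # u) \<in> Rs z" if "wo_less t x z" for z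
    proof -
      have "z \<in> Field t" using that unfolding wo_less_def by (auto intro: FieldI2)
      then have "Rs m \<subseteq> Rs z" using I mle[OF that] by blast
      then show ?thesis using h(1) by auto
    qed
    then have "Q x (s # v, t' # u)" unfolding Q_def using h by auto
    then show ?thesis by blast
  qed
  define g where "g x = (if \<exists>y. wo_less t x y then SOME p. Q x p else ([], []))" for x
  have gQ: "Q x (g x)" if "wo_less t x y" for x y
    using exQ[OF that] that unfolding g_def by (auto intro: someI_ex)
  have inj: "inj_on g (Field t)"
  proof (rule inj_onI)
    fix x1 x2 assume x: "x1 \<in> Field t" "x2 \<in> Field t" "g x1 = g x2"
    show "x1 = x2"
    proof (rule ccontr)
      assume ne: "x1 \<noteq> x2"
      have key: False if "wo_less t a b" "g a = g b" for a b
      proof -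
        have qa: "Q a (g a)" using gQ[OF that(1)] .
        show False
        proof (cases "\<exists>y. wo_less t b y")
          case True
          then obtain y where "wo_less t b y" by blast
          then have "Q b (g b)" by (rule gQ)
          then show False using qa that unfolding Q_def by auto
        next
          case False
          then have "g b = ([], [])" unfolding g_def by auto
          then show False using qa that unfolding Q_def by auto
        qed
      qed
      have "(x1, x2) \<in> t \<or> (x2, x1) \<in> t" using W(5)[OF x(1,2)] .
      then show False
      proof
        assume "(x1, x2) \<in> t" then show False using key[of x1 x2] x(3) ne unfolding wo_less_def by simp
      next
        assume "(x2, x1) \<in> t" then show False using key[of x2 x1] x(3) ne unfolding wo_less_def by simp
      qed
    qed
  qed
  have img: "g ` Field t \<subseteq> lists S \<times> lists S"
  proof
    fix p assume "p \<in> g ` Field t"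
    then obtain x where "p = g x" by blast
    then show "p \<in> lists S \<times> lists S"
    proof (cases "\<exists>y. wo_less t x y")
      case True
      then obtain y where "wo_less t x y" by blast
      then show ?thesis using gQ \<open>p = g x\<close> unfolding Q_def by (cases p) fastforce
    next
      case False then show ?thesis using \<open>p = g x\<close> unfolding g_def by auto
    qed
  qed
  show ?thesis using inj img by blast
qed

lemma card_part:
  assumes good: "good S R" and seq: "r_completing_seq S R t Rs"
  shows "(t, cardSuc (card_of S)) \<in> ordLess \<or> (t, cardSuc natLeq) \<in> ordLess"
proof -
  have wo: "Well_order t" using seq unfolding r_completing_seq_def by auto
  from field_bound[OF good seq] have F: "|Field t| \<le>o |lists S \<times> lists S|"
    using card_of_ordLeq by blast
  show ?thesis
  proof (cases "finite S")
    case True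
    have "countable (lists S \<times> lists S)" using True by (auto intro: countable_finite)
    then obtain f :: "_ \<Rightarrow> nat" where "inj_on f (lists S \<times> lists S)" unfolding countable_def by blast
    then have "|lists S \<times> lists S| \<le>o |UNIV :: nat set|" using card_of_ordLeq by blast
    then have "|lists S \<times> lists S| \<le>o natLeq" using card_of_nat by (rule ordLeq_ordIso_trans)
    then have "|Field t| \<le>o natLeq" by (rule ordLeq_transitive[OF F])
    then have "t <o cardSuc natLeq" by (rule wo_lt_cardSuc[OF wo natLeq_Card_order])
    then show ?thesis by simp
  next
    case False
    have "|lists S \<times> lists S| \<le>o |S \<times> lists S|"
      using card_of_Times_mono1[OF lists_card_infinite[OF False]] .
    moreover have "|S \<times> lists S| \<le>o |S \<times> S|"
      using card_of_Times_mono2[OF lists_card_infinite[OF False]] .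
    ultimately have "|lists S \<times> lists S| \<le>o |S \<times> S|" by (rule ordLeq_transitive)
    then have "|lists S \<times> lists S| \<le>o |S|"
      using card_of_Times_same_infinite[OF False] by (rule ordLeq_ordIso_trans)
    then have "|Field t| \<le>o |S|" by (rule ordLeq_transitive[OF F])
    then have "t <o cardSuc |S|" by (rule wo_lt_cardSuc[OF wo card_of_Card_order])
    then show ?thesis by simp
  qed
qed

end



definition ext_wo :: "'i rel \<Rightarrow> 'i option rel" where
  "ext_wo t = map_prod Some Some ` t \<union> (\<lambda>a. (a, None)) ` insert None (Some ` Field t)"

lemma mem_ext_wo:
  "(Some a, Some b) \<in> ext_wo t \<longleftrightarrow> (a, b) \<in> t"
  "(None, Some b) \<notin> ext_wo t"
  "(p, None) \<in> ext_wo t \<longleftrightarrow> p = None \<or> (\<exists>a. p = Some a \<and> a \<in> Field t)"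
  unfolding ext_wo_def by (auto)

lemma Field_ext_wo: "Field (ext_wo t) = insert None (Some ` Field t)"
  unfolding ext_wo_def Field_def by (auto; force)

lemma ext_wo_cases:
  "(p, q) \<in> ext_wo t \<longleftrightarrow> (case q of None \<Rightarrow> (case p of None \<Rightarrow> True | Some a \<Rightarrow> a \<in> Field t)
      | Some b \<Rightarrow> (case p of None \<Rightarrow> False | Some a \<Rightarrow> (a, b) \<in> t))"
  by (cases p; cases q) (auto simp: mem_ext_wo)

lemma Well_order_ext_wo:
  assumes wo: "Well_order t"
  shows "Well_order (ext_wo t)"
proof -
  note W = wo_facts[OF wo]
  have refl: "refl_on (Field (ext_wo t)) (ext_wo t)"
    unfolding refl_on_def Field_ext_wo using W(3) by (auto simp: ext_wo_cases)
  have tr: "trans (ext_wo t)"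
  proof (rule transI)
    fix x y z assume "(x, y) \<in> ext_wo t" "(y, z) \<in> ext_wo t"
    then show "(x, z) \<in> ext_wo t" using W(1) unfolding trans_def
      by (cases x; cases y; cases z) (auto simp: ext_wo_cases intro: FieldI1)
  qed
  have an: "antisym (ext_wo t)"
  proof (rule antisymI)
    fix x y assume "(x, y) \<in> ext_wo t" "(y, x) \<in> ext_wo t"
    then show "x = y" using W(2) unfolding antisym_def
      by (cases x; cases y) (auto simp: ext_wo_cases)
  qed
  have tot: "total_on (Field (ext_wo t)) (ext_wo t)"
    unfolding total_on_def Field_ext_wo using W(5) by (auto simp: ext_wo_cases)
  have "ext_wo t - Id \<subseteq> map_prod Some Some ` (t - Id) \<union> {(p, q). p \<noteq> None \<and> q = None}"
    unfolding ext_wo_def by auto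
  moreover have "wf (map_prod Some Some ` (t - Id) \<union> {(p, q). p \<noteq> None \<and> q = None})"
  proof (rule wf_Un)
    show "wf (map_prod Some Some ` (t - Id))" using W(4) by (rule wf_map_prod_image) (simp add: inj_def)
    have "{(p, q). p \<noteq> None \<and> q = (None :: 'a option)} \<subseteq> measure (\<lambda>p. case p of None \<Rightarrow> 1 | Some _ \<Rightarrow> 0)"
      by auto
    then show "wf {(p, q). p \<noteq> None \<and> q = (None :: 'a option)}" using wf_subset by blast
    show "Domain (map_prod Some Some ` (t - Id)) \<inter> Range {(p, q). p \<noteq> None \<and> q = None} = {}"
      by auto
  qed
  ultimately have wf: "wf (ext_wo t - Id)" using wf_subset by blast
  show ?thesis unfolding well_order_on_def linear_order_on_def partial_order_on_def preorder_on_def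
    using refl tr an tot wf by (auto intro: FieldI1 FieldI2)
qed

lemma wo_less_ext:
  "wo_less (ext_wo t) (Some a) (Some b) \<longleftrightarrow> wo_less t a b"
  "\<not> wo_less (ext_wo t) None q"
  "wo_less (ext_wo t) p None \<longleftrightarrow> (\<exists>a. p = Some a \<and> a \<in> Field t)"
  unfolding wo_less_def by (auto simp: mem_ext_wo ext_wo_cases split: option.splits)

definition is_last :: "'i rel \<Rightarrow> 'i \<Rightarrow> bool" where
  "is_last t a \<longleftrightarrow> a \<in> Field t \<and> (\<forall>y\<in>Field t. (y, a) \<in> t)"

lemma ext_seq:
  assumes seq: "r_completing_seq S R t Rs"
    and H1: "Field t = {} \<Longrightarrow> X = R"
    and H2: "\<And>a. is_last t a \<Longrightarrow> one_completion S (Rs a) X"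
    and H3: "Field t \<noteq> {} \<Longrightarrow> \<not> (\<exists>a. is_last t a) \<Longrightarrow> X = (\<Union>a\<in>Field t. Rs a)"
  shows "r_completing_seq S R (ext_wo t) (case_option X Rs) \<and> seq_extends t Rs (ext_wo t) (case_option X Rs)"
proof -
  have wo: "Well_order t" and z: "\<And>x. wo_is_zero t x \<Longrightarrow> Rs x = R"
    and sc: "\<And>x y. wo_is_succ t x y \<Longrightarrow> one_completion S (Rs x) (Rs y)"
    and li: "\<And>x. wo_is_limit t x \<Longrightarrow> Rs x = (\<Union>y\<in>{y. wo_less t y x}. Rs y)"
    using seq unfolding r_completing_seq_def by auto
  note W = wo_facts[OF wo]
  let ?t = "ext_wo t" and ?R = "case_option X Rs"
  have FS: "a \<in> Field t" if "wo_less t a b" for a b using that unfolding wo_less_def by (auto intro: FieldI1)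
  have FS2: "b \<in> Field t" if "wo_less t a b" for a b using that unfolding wo_less_def by (auto intro: FieldI2)
  have last_iff: "is_last t a \<longleftrightarrow> a \<in> Field t \<and> \<not> (\<exists>b. wo_less t a b)" for a
  proof
    assume "is_last t a" then show "a \<in> Field t \<and> \<not> (\<exists>b. wo_less t a b)"
      using W(2) FS2 unfolding is_last_def wo_less_def antisym_def by blast
  next
    assume h: "a \<in> Field t \<and> \<not> (\<exists>b. wo_less t a b)"
    show "is_last t a" unfolding is_last_def
    proof (intro conjI ballI)
      show "a \<in> Field t" using h by simp
      fix y assume y: "y \<in> Field t"
      show "(y, a) \<in> t"
      proof (cases "y = a")
        case True then show ?thesis using W(3) y by simp
      next
        case False then show ?thesis using W(5)[OF y] h unfolding wo_less_def by auto
      qed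
    qed
  qed
  have zero: "?R p = R" if "wo_is_zero ?t p" for p
  proof (cases p)
    case None
    have "Field t = {}"
    proof (rule ccontr)
      assume "Field t \<noteq> {}"
      then obtain a where "a \<in> Field t" by blast
      then have "wo_less ?t (Some a) None" by (simp add: wo_less_ext)
      then show False using that None unfolding wo_is_zero_def by blast
    qed
    then show ?thesis using H1 None by simp
  next
    case (Some a)
    have "wo_is_zero t a"
      using that Some unfolding wo_is_zero_def by (auto simp: Field_ext_wo) (metis wo_less_ext(1))
    then show ?thesis using z Some by simp
  qed
  have succ: "one_completion S (?R p) (?R q)" if "wo_is_succ ?t p q" for p q
  proof -
    have pq: "wo_less ?t p q" and nz: "\<not> (\<exists>z. wo_less ?t p z \<and> wo_less ?t z q)"
      using that unfolding wo_is_succ_def by auto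
    obtain a where pa: "p = Some a" using pq by (cases p) (auto simp: wo_less_ext)
    show ?thesis
    proof (cases q)
      case None
      have aF: "a \<in> Field t" using pq pa None by (simp add: wo_less_ext)
      have "\<not> (\<exists>b. wo_less t a b)"
      proof
        assume "\<exists>b. wo_less t a b"
        then obtain b where "wo_less t a b" by blast
        then have "wo_less ?t p (Some b)" "wo_less ?t (Some b) q"
          using pa None FS2 by (auto simp: wo_less_ext)
        then show False using nz by blast
      qed
      then have "is_last t a" using last_iff aF by blast
      then show ?thesis using H2 pa None by simp
    next
      case (Some b)
      have "wo_is_succ t a b" unfolding wo_is_succ_def
      proof
        show "wo_less t a b" using pq pa Some by (simp add: wo_less_ext)
        show "\<not> (\<exists>z. wo_less t a z \<and> wo_less t z b)"
        proof
          assume "\<exists>z. wo_less t a z \<and> wo_less t z b"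
          then obtain z where "wo_less t a z" "wo_less t z b" by blast
          then have "wo_less ?t p (Some z) \<and> wo_less ?t (Some z) q" using pa Some by (simp add: wo_less_ext)
          then show False using nz by blast
        qed
      qed
      then show ?thesis using sc pa Some by simp
    qed
  qed
  have limit: "?R p = (\<Union>y\<in>{y. wo_less ?t y p}. ?R y)" if lp: "wo_is_limit ?t p" for p
  proof (cases p)
    case None
    have ne: "Field t \<noteq> {}"
    proof
      assume "Field t = {}"
      then have "wo_is_zero ?t None" unfolding wo_is_zero_def by (auto simp: Field_ext_wo wo_less_ext)
      then show False using lp None unfolding wo_is_limit_def by blast
    qed
    have nl: "\<not> (\<exists>a. is_last t a)"
    proof
      assume "\<exists>a. is_last t a"
      then obtain a where a: "a \<in> Field t" "\<not> (\<exists>b. wo_less t a b)" using last_iff by blast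
      have "wo_is_succ ?t (Some a) None" unfolding wo_is_succ_def
      proof
        show "wo_less ?t (Some a) None" using a by (simp add: wo_less_ext)
        show "\<not> (\<exists>z. wo_less ?t (Some a) z \<and> wo_less ?t z None)"
        proof
          assume "\<exists>z. wo_less ?t (Some a) z \<and> wo_less ?t z None"
          then obtain z where "wo_less ?t (Some a) z" "wo_less ?t z None" by blast
          then show False using a by (cases z) (auto simp: wo_less_ext)
        qed
      qed
      then show False using lp None unfolding wo_is_limit_def by blast
    qed
    have "{y. wo_less ?t y None} = Some ` Field t" by (auto simp: wo_less_ext)
    then show ?thesis using H3[OF ne nl] None by simp
  next
    case (Some a)
    have aF: "a \<in> Field t" using lp Some unfolding wo_is_limit_def by (auto simp: Field_ext_wo)
    have "wo_is_limit t a" unfolding wo_is_limit_def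
    proof (intro conjI)
      show "a \<in> Field t" by (rule aF)
      show "\<not> wo_is_zero t a"
      proof
        assume "wo_is_zero t a"
        then have "wo_is_zero ?t (Some a)" unfolding wo_is_zero_def
          by (auto simp: Field_ext_wo wo_less_ext) (metis option.exhaust wo_less_ext(1,2))
        then show False using lp Some unfolding wo_is_limit_def by blast
      qed
      show "\<not> (\<exists>y. wo_is_succ t y a)"
      proof
        assume "\<exists>y. wo_is_succ t y a"
        then obtain y where y: "wo_is_succ t y a" by blast
        have "wo_is_succ ?t (Some y) (Some a)" unfolding wo_is_succ_def
        proof
          show "wo_less ?t (Some y) (Some a)" using y unfolding wo_is_succ_def by (simp add: wo_less_ext)
          show "\<not> (\<exists>z. wo_less ?t (Some y) z \<and> wo_less ?t z (Some a))"
          proof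
            assume "\<exists>z. wo_less ?t (Some y) z \<and> wo_less ?t z (Some a)"
            then obtain z where "wo_less ?t (Some y) z" "wo_less ?t z (Some a)" by blast
            then show False using y unfolding wo_is_succ_def by (cases z) (auto simp: wo_less_ext)
          qed
        qed
        then show False using lp Some unfolding wo_is_limit_def by blast
      qed
    qed
    then have "Rs a = (\<Union>y\<in>{y. wo_less t y a}. Rs y)" by (rule li)
    moreover have "{y. wo_less ?t y (Some a)} = Some ` {y. wo_less t y a}"
    proof
      show "{y. wo_less ?t y (Some a)} \<subseteq> Some ` {y. wo_less t y a}"
      proof
        fix y assume "y \<in> {y. wo_less ?t y (Some a)}"
        then show "y \<in> Some ` {y. wo_less t y a}" by (cases y) (auto simp: wo_less_ext)
      qed
    qed (auto simp: wo_less_ext)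
    ultimately show ?thesis using Some by simp
  qed
  have rc: "r_completing_seq S R ?t ?R"
    unfolding r_completing_seq_def using Well_order_ext_wo[OF wo] zero succ limit by blast
  have se: "seq_extends t Rs ?t ?R"
    unfolding seq_extends_def
  proof (intro exI[of _ Some] conjI ballI allI impI)
    show "inj_on Some (Field t)" by simp
    show "Some ` Field t \<subset> Field ?t" by (auto simp: Field_ext_wo)
  next
    fix a b assume "a \<in> Field t" "b \<in> Field t"
    show "((a, b) \<in> t) = ((Some a, Some b) \<in> ?t)" by (simp add: mem_ext_wo)
  next
    fix a y assume a: "a \<in> Field t" and "(y, Some a) \<in> ?t"
    then show "y \<in> Some ` Field t" by (cases y) (auto simp: mem_ext_wo intro: FieldI1)
  next
    fix a assume "a \<in> Field t" then show "?R (Some a) = Rs a" by simp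
  qed
  show ?thesis using rc se by blast
qed



theorem proposition5p3:
  fixes S :: "'a set" and R :: "'a list uprod set"
    and r :: "'o rel" and lam mu :: "'a list \<Rightarrow> 'o"
    and t :: "'i rel" and Rs :: "'i \<Rightarrow> 'a list uprod set"
  assumes pres: "positive_presentation S R"
    and hom: "homogeneous_via S R r lam mu"
    and seq: "r_completing_seq S R t Rs"
  shows "((t, cardSuc (card_of S)) \<in> ordLess \<or> (t, cardSuc natLeq) \<in> ordLess)
    \<and> (\<forall>x\<in>Field t. \<forall>u\<in>lists S. \<forall>v\<in>lists S. pcong (Rs x) u v \<longleftrightarrow> pcong R u v)
    \<and> (non_extendable S R t Rs \<longrightarrow>
           (\<exists>x\<in>Field t. (\<forall>y\<in>Field t. (y, x) \<in> t) \<and> r_complete S (Rs x) \<and>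
              (\<forall>u\<in>lists S. \<forall>v\<in>lists S. pcong (Rs x) u v \<longleftrightarrow> pcong R u v)))"
proof -
  have good: "good S R" using pres unfolding positive_presentation_def good_def by auto
  have P1: "(t, cardSuc (card_of S)) \<in> ordLess \<or> (t, cardSuc natLeq) \<in> ordLess"
    by (rule card_part[OF good seq])
  have P2: "\<forall>x\<in>Field t. \<forall>u\<in>lists S. \<forall>v\<in>lists S. pcong (Rs x) u v \<longleftrightarrow> pcong R u v"
    using seq_pcong[OF good seq] by blast
  have wo: "Well_order t" using seq unfolding r_completing_seq_def by auto
  note W = wo_facts[OF wo]
  have P3: "(\<exists>x\<in>Field t. (\<forall>y\<in>Field t. (y, x) \<in> t) \<and> r_complete S (Rs x) \<and>
              (\<forall>u\<in>lists S. \<forall>v\<in>lists S. pcong (Rs x) u v \<longleftrightarrow> pcong R u v))"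
    if ne: "non_extendable S R t Rs"
  proof -
    have noext: False
      if "Field t = {} \<Longrightarrow> X = R" "\<And>a. is_last t a \<Longrightarrow> one_completion S (Rs a) X"
        "Field t \<noteq> {} \<Longrightarrow> \<not> (\<exists>a. is_last t a) \<Longrightarrow> X = (\<Union>a\<in>Field t. Rs a)" for X
    proof -
      have "r_completing_seq S R (ext_wo t) (case_option X Rs) \<and> seq_extends t Rs (ext_wo t) (case_option X Rs)"
        using ext_seq[OF seq that] .
      then show False using ne unfolding non_extendable_def by blast
    qed
    have ne1: "Field t \<noteq> {}"
    proof
      assume e: "Field t = {}"
      show False
      proof (rule noext[of R])
        fix a assume "is_last t a" then show "one_completion S (Rs a) R" using e unfolding is_last_def by simp
      qed (use e in auto)
    qed
    obtain x where last: "is_last t x"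
    proof (rule ccontr)
      assume nl: "\<not> thesis"
      have "\<not> (\<exists>a. is_last t a)" using that nl by blast
      show False
      proof (rule noext[of "\<Union>a\<in>Field t. Rs a"])
        fix a assume "is_last t a" then show "one_completion S (Rs a) (\<Union>a\<in>Field t. Rs a)"
          using \<open>\<not> (\<exists>a. is_last t a)\<close> by blast
      qed (use ne1 in auto)
    qed
    have xF: "x \<in> Field t" and xl: "\<forall>y\<in>Field t. (y, x) \<in> t" using last unfolding is_last_def by auto
    have CL: "\<forall>s\<in>S. \<forall>t'\<in>S. \<forall>r'\<in>S. \<forall>u\<in>lists S. \<forall>v\<in>lists S.
         reverses S (Rs x) [Neg s, Pos r', Neg r', Pos t'] (pos_word v @ inv_word u) \<longrightarrow>
         reverses S (Rs x) (inv_word v @ [Neg s, Pos t'] @ pos_word u) []"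
    proof (intro ballI impI)
      fix s t' r' u v
      assume h: "s \<in> S" "t' \<in> S" "r' \<in> S" "u \<in> lists S" "v \<in> lists S"
        "reverses S (Rs x) [Neg s, Pos r', Neg r', Pos t'] (pos_word v @ inv_word u)"
      show "reverses S (Rs x) (inv_word v @ [Neg s, Pos t'] @ pos_word u) []"
      proof (rule ccontr)
        assume nr: "\<not> reverses S (Rs x) (inv_word v @ [Neg s, Pos t'] @ pos_word u) []"
        let ?X = "insert (Upair (s # v) (t' # u)) (Rs x)"
        have oc: "one_completion S (Rs x) ?X"
          unfolding one_completion_def using h nr by blast
        show False
        proof (rule noext[of ?X])
          fix a assume a: "is_last t a"
          then have "a = x" using last W(2) unfolding is_last_def antisym_def by blast
          then show "one_completion S (Rs a) ?X" using oc by simp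
        qed (use ne1 last in auto)
      qed
    qed
    note Ix = seq_inv[OF good seq xF]
    have goodx: "good S (Rs x)" using Ix by blast
    have hw: "Well_order r" and lamF: "\<forall>u\<in>lists S. lam u \<in> Field r"
      and lamI0: "\<forall>u\<in>lists S. \<forall>v\<in>lists S. pcong R u v \<longrightarrow> lam u = lam v"
      and lamS: "\<forall>s\<in>S. \<forall>u\<in>lists S. (lam u, lam (s # u)) \<in> r \<and> lam u \<noteq> lam (s # u)"
      using hom unfolding homogeneous_via_def by auto
    have lamI: "\<forall>u\<in>lists S. \<forall>v\<in>lists S. pcong (Rs x) u v \<longrightarrow> lam u = lam v"
      using lamI0 P2 xF by blast
    have rc: "r_complete S (Rs x)"
      unfolding r_complete_def
    proof (intro ballI impI)
      fix u v u' v'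
      assume l: "u \<in> lists S" "v \<in> lists S" "u' \<in> lists S" "v' \<in> lists S"
        and e: "pcong (Rs x) (u @ v') (v @ u')"
      from main_complete[OF goodx hw lamF lamI lamS CL l(1,2,4,3) e] obtain x0 y0 f where
        m: "Rev S (Rs x) u v x0 y0" "f \<in> lists S" "pcong (Rs x) v' (x0 @ f)" "pcong (Rs x) u' (y0 @ f)"
        by blast
      have "x0 \<in> lists S" "y0 \<in> lists S" using Rev_lists[OF m(1)] by auto
      then show "\<exists>u''\<in>lists S. \<exists>v''\<in>lists S. \<exists>w\<in>lists S.
           reverses S (Rs x) (inv_word u @ pos_word v) (pos_word v'' @ inv_word u'') \<and>
           pcong (Rs x) u' (u'' @ w) \<and> pcong (Rs x) v' (v'' @ w)"
        using Rev_sound[OF m(1)] m(2,3,4) by blast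
    qed
    show ?thesis using xF xl rc P2 by blast
  qed
  show ?thesis using P1 P2 P3 by blast
qed


end
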